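(* Let $H$ satisfy Condition (H). If $(x,p)\in\mathbb K\times\mathbb R$ is such that $t_{x,p}<\infty$, then $\lim_{t\uparrow t_{x,p}}(X_t^{x,p},P_t^{x,p})$ exists and is either $(\partial_-,-\infty)$ or $(\partial_+,+\infty)$.
   Context: $\mathbb K$ is either $\mathbb R$ or $[-1,1]$, with interior $\mathbb K^\circ$; $\partial_-=-\infty,\partial_+=+\infty$ if $\mathbb K=\mathbb R$ and $\partial_-=-1,\partial_+=1$ if $\mathbb K=[-1,1]$. The Lagrangian is $\mathcal L(x,v)=\sup_p(pv-H(x,p))$. The Hamilton equations are $\dot X=\partial_pH(X,P)$, $\dot P=-\partial_xH(X,P)$; $(X_s^{x,p},P_s^{x,p})$ is the solution from $(x,p)$ on its maximal interval of existence $[0,t_{x,p})$ (for $\mathbb K=[-1,1]$, maximality within $[-1,1]\times\mathbb R$). Condition (H) on $H:\mathbb K\times\mathbb R\to\mathbb R$: $H(x,0)=0$ for all $x$, and (H1) $H$ is $C^2$ with $\partial_p^2H>0$ on $\mathbb K\times\mathbb R$; if $\mathbb K=[-1,1]$, $H$ is the restriction of a $C^2$ function on $(-1-\epsilon,1+\epsilon)\times\mathbb R$ for some $\epsilon>0$. (H2) for every compact $K\subseteq\mathbb K^\circ$ there is $\theta_K:[0,\infty)\to[0,\infty)$ with $\theta_K(r)/r\to\infty$ as $r\to\infty$; for every $M\ge0$ a constant $k_M$ with $\theta_K(r+m)\le k_M(1+\theta_K(r))$ for all $m\in[0,M]$, $r\ge0$; constants $c_K,C_K$ with $\mathcal L(x,v)\ge\theta_K(|v|)-c_K$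 and $|\partial_x\mathcal L(x,v)|+|\partial_v\mathcal L(x,v)|\le C_K\theta_K(|v|)$ for all $x\in K,v\in\mathbb R$. (H3) for each compact $K\subseteq\mathbb K^\circ$, $\lim_{|p|\to\infty}\inf_{x\in K}H(x,p)/|p|=\infty$; if $\mathbb K=[-1,1]$ moreover $\lim_{p\to\infty}H(-1,p)/p=\infty$ and $\lim_{p\to-\infty}H(1,p)/(-p)=\infty$. (H4) $\lim_{x\to\partial_-}\operatorname{argmin}_pH(x,p)=-\infty$ and $\lim_{x\to\partial_+}\operatorname{argmin}_pH(x,p)=+\infty$. (H5) there are $(y_n^+,q_n^+)\in\mathbb K^\circ\times(0,\infty)$ converging to $(\partial_+,+\infty)$ with $\partial_pH(y_n^+,q)\ge0$ for $q\ge q_n^+$ and $-\partial_xH(y,q_n^+)\ge0$ for $y\ge y_n^+$, and $(y_n^-,q_n^-)\in\mathbb K^\circ\times(-\infty,0)$ converging to $(\partial_-,-\infty)$ with $\partial_pH(y_n^-,q)\le0$ for $q\le q_n^-$ and $-\partial_xH(y,q_n^-)\le0$ for $y\le y_n^-$. *)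

theory Defs
  imports "HOL-Analysis.Analysis"
begin

definition Kset :: "bool \<Rightarrow> real set" where
  "Kset b = (if b then {-1..1} else UNIV)"

text \<open>Filters/targets for x tending to the lower / upper end of K (within K),
  and the limit objects partial_- , partial_+ as target filters.\<close>
definition lowerF :: "bool \<Rightarrow> real filter" where
  "lowerF b = (if b then at (-1) within {-1..1} else at_bot)"
definition upperF :: "bool \<Rightarrow> real filter" where
  "upperF b = (if b then at 1 within {-1..1} else at_top)"
definition lowerLim :: "bool \<Rightarrow> real filter" where
  "lowerLim b = (if b then nhds (-1) else at_bot)"
definition upperLim :: "bool \<Rightarrow> real filter" where
  "upperLim b = (if b then nhds 1 else at_top)"

definition pdx :: "(real \<Rightarrow> real \<Rightarrow> real) \<Rightarrow> real \<Rightarrow> real \<Rightarrow> real" where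
  "pdx f x p = deriv (\<lambda>y. f y p) x"
definition pdp :: "(real \<Rightarrow> real \<Rightarrow> real) \<Rightarrow> real \<Rightarrow> real \<Rightarrow> real" where
  "pdp f x p = deriv (\<lambda>q. f x q) p"

definition C1_on :: "(real \<times> real) set \<Rightarrow> (real \<Rightarrow> real \<Rightarrow> real) \<Rightarrow> bool" where
  "C1_on U f \<longleftrightarrow>
     (\<forall>z\<in>U. ((\<lambda>w. f (fst w) (snd w)) has_derivative
               (\<lambda>h. pdx f (fst z) (snd z) * fst h + pdp f (fst z) (snd z) * snd h)) (at z))
   \<and> continuous_on U (\<lambda>w. pdx f (fst w) (snd w))
   \<and> continuous_on U (\<lambda>w. pdp f (fst w) (snd w))"

definition C2_on :: "(real \<times> real) set \<Rightarrow> (real \<Rightarrow> real \<Rightarrow> real) \<Rightarrow> bool" where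
  "C2_on U f \<longleftrightarrow> C1_on U f \<and> C1_on U (pdx f) \<and> C1_on U (pdp f)"

definition Lag :: "(real \<Rightarrow> real \<Rightarrow> real) \<Rightarrow> real \<Rightarrow> real \<Rightarrow> real" where
  "Lag H x v = (SUP p. p * v - H x p)"

definition condH0 :: "bool \<Rightarrow> (real \<Rightarrow> real \<Rightarrow> real) \<Rightarrow> bool" where
  "condH0 b H \<longleftrightarrow> (\<forall>x\<in>Kset b. H x 0 = 0)"

definition condH1 :: "bool \<Rightarrow> (real \<Rightarrow> real \<Rightarrow> real) \<Rightarrow> bool" where
  "condH1 b H \<longleftrightarrow>
     (if b then (\<exists>\<epsilon>>0. C2_on ({-1-\<epsilon><..<1+\<epsilon>} \<times> UNIV) H)
      else C2_on UNIV H)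
   \<and> (\<forall>x\<in>Kset b. \<forall>p. pdp (pdp H) x p > 0)"

definition condH2 :: "bool \<Rightarrow> (real \<Rightarrow> real \<Rightarrow> real) \<Rightarrow> bool" where
  "condH2 b H \<longleftrightarrow>
    (\<forall>K. compact K \<and> K \<subseteq> interior (Kset b) \<longrightarrow>
      (\<exists>\<theta>::real\<Rightarrow>real. (\<forall>r\<ge>0. \<theta> r \<ge> 0)
         \<and> filterlim (\<lambda>r. \<theta> r / r) at_top at_top
         \<and> (\<forall>M\<ge>0. \<exists>k. \<forall>m\<in>{0..M}. \<forall>r\<ge>0. \<theta> (r + m) \<le> k * (1 + \<theta> r))
         \<and> (\<exists>c C. \<forall>x\<in>K. \<forall>v. Lag H x v \<ge> \<theta> \<bar>v\<bar> - c
                 \<and> \<bar>pdx (Lag H) x v\<bar> + \<bar>pdp (Lag H) x v\<bar> \<le> C * \<theta> \<bar>v\<bar>)))"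

definition condH3 :: "bool \<Rightarrow> (real \<Rightarrow> real \<Rightarrow> real) \<Rightarrow> bool" where
  "condH3 b H \<longleftrightarrow>
    (\<forall>K. compact K \<and> K \<noteq> {} \<and> K \<subseteq> interior (Kset b) \<longrightarrow>
       filterlim (\<lambda>p. (INF x\<in>K. H x p / \<bar>p\<bar>)) at_top at_infinity)
   \<and> (b \<longrightarrow> filterlim (\<lambda>p. H (-1) p / p) at_top at_top
          \<and> filterlim (\<lambda>p. H 1 p / (- p)) at_top at_bot)"

definition condH4 :: "bool \<Rightarrow> (real \<Rightarrow> real \<Rightarrow> real) \<Rightarrow> bool" where
  "condH4 b H \<longleftrightarrow>
     filterlim (\<lambda>x. ARG_MIN (H x) p. True) at_bot (lowerF b)
   \<and> filterlim (\<lambda>x. ARG_MIN (H x) p. True) at_top (upperF b)"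

definition condH5 :: "bool \<Rightarrow> (real \<Rightarrow> real \<Rightarrow> real) \<Rightarrow> bool" where
  "condH5 b H \<longleftrightarrow>
    (\<exists>y q :: nat \<Rightarrow> real.
       (\<forall>n. y n \<in> interior (Kset b) \<and> q n > 0)
     \<and> filterlim y (upperLim b) sequentially \<and> filterlim q at_top sequentially
     \<and> (\<forall>n. \<forall>r\<ge>q n. pdp H (y n) r \<ge> 0)
     \<and> (\<forall>n. \<forall>z\<in>Kset b. z \<ge> y n \<longrightarrow> - pdx H z (q n) \<ge> 0))
  \<and> (\<exists>y q :: nat \<Rightarrow> real.
       (\<forall>n. y n \<in> interior (Kset b) \<and> q n < 0)
     \<and> filterlim y (lowerLim b) sequentially \<and> filterlim q at_bot sequentially
     \<and> (\<forall>n. \<forall>r\<le>q n. pdp H (y n) r \<le> 0)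
     \<and> (\<forall>n. \<forall>z\<in>Kset b. z \<le> y n \<longrightarrow> - pdx H z (q n) \<le> 0))"

definition conditionH :: "bool \<Rightarrow> (real \<Rightarrow> real \<Rightarrow> real) \<Rightarrow> bool" where
  "conditionH b H \<longleftrightarrow> condH0 b H \<and> condH1 b H \<and> condH2 b H \<and> condH3 b H
                      \<and> condH4 b H \<and> condH5 b H"

definition ham_sol :: "bool \<Rightarrow> (real \<Rightarrow> real \<Rightarrow> real) \<Rightarrow> real \<Rightarrow> real \<Rightarrow> real
                        \<Rightarrow> (real \<Rightarrow> real) \<Rightarrow> (real \<Rightarrow> real) \<Rightarrow> bool" where
  "ham_sol b H x p T X P \<longleftrightarrow> X 0 = x \<and> P 0 = p \<and>
     (\<forall>s\<in>{0..<T}. X s \<in> Kset b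
        \<and> (X has_real_derivative pdp H (X s) (P s)) (at s within {0..<T})
        \<and> (P has_real_derivative - pdx H (X s) (P s)) (at s within {0..<T}))"

definition ham_maxsol :: "bool \<Rightarrow> (real \<Rightarrow> real \<Rightarrow> real) \<Rightarrow> real \<Rightarrow> real \<Rightarrow> real
                        \<Rightarrow> (real \<Rightarrow> real) \<Rightarrow> (real \<Rightarrow> real) \<Rightarrow> bool" where
  "ham_maxsol b H x p T X P \<longleftrightarrow> ham_sol b H x p T X P \<and>
     \<not> (\<exists>T' X' P'. T' > T \<and> ham_sol b H x p T' X' P' \<and>
                   (\<forall>s\<in>{0..<T}. X' s = X s \<and> P' s = P s))"

end

theory Submission
  imports Defs "HOL-Analysis.Analysis"
begin


lemma picard_global:
  fixes G :: "real \<times> real \<Rightarrow> real \<times> real" and z0 :: "real \<times> real"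
  assumes cont: "continuous_on UNIV G"
    and lip: "\<And>u v. norm (G u - G v) \<le> L * norm (u - v)" and L: "L \<ge> 0"
    and bnd: "\<And>u. norm (G u) \<le> B"
    and d: "\<delta> > 0" "\<delta> * L < 1"
  shows "\<exists>z. z 0 = z0 \<and> (\<forall>t\<in>{0..\<delta>}. (z has_vector_derivative G (z t)) (at t within {0..\<delta>})
           \<and> norm (z t - z0) \<le> B * t)"
proof -
  define cl where "cl t = min \<delta> (max 0 t)" for t :: real
  have cl_in: "cl t \<in> {0..\<delta>}" for t using d by (auto simp: cl_def)
  have clc: "continuous_on UNIV cl" unfolding cl_def by (intro continuous_intros)
  define I where "I g t = z0 + integral {0..cl t} (\<lambda>s. G (apply_bcontfun g s))"
    for g :: "real \<Rightarrow>\<^sub>C (real \<times> real)" and t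
  have Gc: "continuous_on A (\<lambda>s. G (apply_bcontfun g s))" for g :: "real \<Rightarrow>\<^sub>C (real \<times> real)" and A
    by (rule continuous_on_compose2[OF cont]) auto
  have B0: "B \<ge> 0" using bnd[of 0] norm_ge_zero order_trans by blast
  have mem: "I g \<in> bcontfun" for g
  proof (rule bcontfun_normI)
    have "continuous_on {0..\<delta>} (\<lambda>x. integral {0..x} (\<lambda>s. G (apply_bcontfun g s)))"
      by (rule indefinite_integral_continuous_1) (rule integrable_continuous_real[OF Gc])
    then have "continuous_on UNIV (\<lambda>t. integral {0..cl t} (\<lambda>s. G (apply_bcontfun g s)))"
      by (rule continuous_on_compose2[OF _ clc]) (use cl_in in auto)
    then show "continuous_on UNIV (I g)" unfolding I_def by (intro continuous_intros)
    fix t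
    have "norm (integral {0..cl t} (\<lambda>s. G (apply_bcontfun g s))) \<le> B * (cl t - 0)"
      by (rule integral_bound) (use cl_in[of t] Gc bnd in auto)
    also have "\<dots> \<le> B * \<delta>" using cl_in[of t] B0 by (auto intro: mult_left_mono)
    finally show "norm (I g t) \<le> norm z0 + B * \<delta>" unfolding I_def
      by (meson add_left_mono norm_triangle_ineq order_trans)
  qed
  define \<Phi> where "\<Phi> g = Bcontfun (I g)" for g
  have app: "apply_bcontfun (\<Phi> g) t = I g t" for g t
    unfolding \<Phi>_def using mem[of g] by (simp add: Bcontfun_inverse)
  have contr: "dist (\<Phi> g) (\<Phi> h) \<le> (\<delta> * L) * dist g h" for g h
  proof (rule dist_bound)
    fix t
    have "I g t - I h t = integral {0..cl t} (\<lambda>s. G (apply_bcontfun g s) - G (apply_bcontfun h s))"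
      unfolding I_def
      by (subst integral_diff) (auto intro!: integrable_continuous_real Gc)
    also have "norm \<dots> \<le> (L * dist g h) * (cl t - 0)"
    proof (rule integral_bound)
      show "0 \<le> cl t" using cl_in by auto
      show "continuous_on {0..cl t} (\<lambda>s. G (apply_bcontfun g s) - G (apply_bcontfun h s))"
        by (intro continuous_intros Gc)
      fix s
      have "norm (G (apply_bcontfun g s) - G (apply_bcontfun h s)) \<le> L * norm (apply_bcontfun g s - apply_bcontfun h s)"
        by (rule lip)
      also have "\<dots> \<le> L * dist g h" using dist_bounded[of g s h] L
        by (simp add: dist_norm mult_left_mono)
      finally show "norm (G (apply_bcontfun g s) - G (apply_bcontfun h s)) \<le> L * dist g h" .
    qed
    also have "\<dots> \<le> (\<delta> * L) * dist g h"
      using cl_in[of t] L zero_le_dist[of g h]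
      by (simp add: mult.commute mult.left_commute mult_left_mono mult_right_mono)
        (metis mult.assoc mult_left_mono mult_right_mono zero_le_dist)
    finally show "dist (apply_bcontfun (\<Phi> g) t) (apply_bcontfun (\<Phi> h) t) \<le> \<delta> * L * dist g h"
      by (simp add: app dist_norm)
  qed
  obtain z where z: "\<Phi> z = z"
    using banach_fix_type[of "\<delta> * L" \<Phi>] contr d L by auto
  have zeq: "apply_bcontfun z t = z0 + integral {0..t} (\<lambda>s. G (apply_bcontfun z s))" if "t \<in> {0..\<delta>}" for t
  proof -
    have "apply_bcontfun z t = I z t" using app[of z t] z by simp
    also have "cl t = t" using that by (auto simp: cl_def)
    then have "I z t = z0 + integral {0..t} (\<lambda>s. G (apply_bcontfun z s))" by (simp add: I_def)
    finally show ?thesis .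
  qed
  show ?thesis
  proof (intro exI conjI ballI)
    show "apply_bcontfun z 0 = z0" using zeq[of 0] d by simp
    fix t assume t: "t \<in> {0..\<delta>}"
    have "((\<lambda>u. integral {0..u} (\<lambda>s. G (apply_bcontfun z s))) has_vector_derivative G (apply_bcontfun z t)) (at t within {0..\<delta>})"
      by (rule integral_has_vector_derivative[OF Gc t])
    from has_vector_derivative_add[OF has_vector_derivative_const[of z0] this]
    have D: "((\<lambda>u. z0 + integral {0..u} (\<lambda>s. G (apply_bcontfun z s))) has_vector_derivative G (apply_bcontfun z t)) (at t within {0..\<delta>})"
      by simp
    show "(apply_bcontfun z has_vector_derivative G (apply_bcontfun z t)) (at t within {0..\<delta>})"
      by (rule has_vector_derivative_transform[OF t _ D]) (simp add: zeq)
    have "norm (integral {0..t} (\<lambda>s. G (apply_bcontfun z s))) \<le> B * (t - 0)"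
      by (rule integral_bound) (use t Gc bnd in auto)
    then show "norm (apply_bcontfun z t - z0) \<le> B * t" using zeq[OF t] by simp
  qed
qed


lemma C1_D:
  assumes "C1_on U f" "z \<in> U"
  shows "((\<lambda>w. f (fst w) (snd w)) has_derivative
          (\<lambda>h. pdx f (fst z) (snd z) * fst h + pdp f (fst z) (snd z) * snd h)) (at z)"
  using assms unfolding C1_on_def by blast

lemma C1_cont_pdx: "C1_on U f \<Longrightarrow> continuous_on U (\<lambda>w. pdx f (fst w) (snd w))"
  unfolding C1_on_def by blast
lemma C1_cont_pdp: "C1_on U f \<Longrightarrow> continuous_on U (\<lambda>w. pdp f (fst w) (snd w))"
  unfolding C1_on_def by blast

lemma C1_cont: assumes "C1_on U f" shows "continuous_on U (\<lambda>w. f (fst w) (snd w))"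
proof -
  have "continuous (at z) (\<lambda>w. f (fst w) (snd w))" if "z \<in> U" for z
    using C1_D[OF assms that] has_derivative_continuous by blast
  then show ?thesis by (simp add: continuous_at_imp_continuous_on)
qed

lemma C1_dp:
  assumes "C1_on U f" "(x, q) \<in> U"
  shows "((\<lambda>q. f x q) has_real_derivative pdp f x q) (at q)"
proof -
  have g: "((\<lambda>q. (x, q)) has_derivative (\<lambda>h. (0, h))) (at q)"
    by (auto intro!: derivative_eq_intros)
  from has_derivative_compose[OF g C1_D[OF assms]]
  have "((\<lambda>q. f x q) has_derivative (\<lambda>h. pdx f x q * 0 + pdp f x q * h)) (at q)" by simp
  then show ?thesis by (simp add: has_field_derivative_def)
qed

lemma C1_dx:
  assumes "C1_on U f" "(x, q) \<in> U"
  shows "((\<lambda>x. f x q) has_real_derivative pdx f x q) (at x)"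
proof -
  have g: "((\<lambda>x. (x, q)) has_derivative (\<lambda>h. (h, 0))) (at x)"
    by (auto intro!: derivative_eq_intros)
  from has_derivative_compose[OF g C1_D[OF assms]]
  have "((\<lambda>x. f x q) has_derivative (\<lambda>h. pdx f x q * h + pdp f x q * 0)) (at x)" by simp
  then show ?thesis by (simp add: has_field_derivative_def)
qed

lemma cont_bound:
  fixes f :: "'a::metric_space \<Rightarrow> 'b::real_normed_vector"
  assumes "compact S" "continuous_on S f"
  shows "\<exists>B. B > 0 \<and> (\<forall>x\<in>S. norm (f x) \<le> B)"
proof -
  have "bounded (f ` S)" using compact_continuous_image[OF assms(2,1)] compact_imp_bounded by blast
  then obtain a where "\<forall>y\<in>f ` S. norm y \<le> a" by (auto simp: bounded_iff)
  then show ?thesis by (intro exI[of _ "\<bar>a\<bar> + 1"]) force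
qed

lemma C1_lip:
  assumes C: "C1_on U f" and S: "convex S" "compact S" "S \<subseteq> U"
  shows "\<exists>N. \<forall>u\<in>S. \<forall>v\<in>S. \<bar>f (fst u) (snd u) - f (fst v) (snd v)\<bar> \<le> N * norm (u - v)"
proof -
  have c1: "continuous_on S (\<lambda>w. \<bar>pdx f (fst w) (snd w)\<bar> + \<bar>pdp f (fst w) (snd w)\<bar>)"
    using continuous_on_subset[OF C1_cont_pdx[OF C] S(3)] continuous_on_subset[OF C1_cont_pdp[OF C] S(3)]
    by (intro continuous_intros)
  obtain N where N: "\<forall>w\<in>S. norm (\<bar>pdx f (fst w) (snd w)\<bar> + \<bar>pdp f (fst w) (snd w)\<bar>) \<le> N"
    using cont_bound[OF S(2) c1] by blast
  have "norm ((\<lambda>w. f (fst w) (snd w)) u - (\<lambda>w. f (fst w) (snd w)) v) \<le> N * norm (u - v)"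
    if "u \<in> S" "v \<in> S" for u v
  proof (rule differentiable_bound[OF S(1) _ _ that])
    fix w assume w: "w \<in> S"
    show "((\<lambda>w. f (fst w) (snd w)) has_derivative
          (\<lambda>h. pdx f (fst w) (snd w) * fst h + pdp f (fst w) (snd w) * snd h)) (at w within S)"
      using C1_D[OF C] w S(3) has_derivative_at_withinI by blast
    show "onorm (\<lambda>h. pdx f (fst w) (snd w) * fst h + pdp f (fst w) (snd w) * snd h) \<le> N"
    proof (rule onorm_le)
      fix h :: "real \<times> real"
      have "norm (pdx f (fst w) (snd w) * fst h + pdp f (fst w) (snd w) * snd h)
            \<le> \<bar>pdx f (fst w) (snd w)\<bar> * \<bar>fst h\<bar> + \<bar>pdp f (fst w) (snd w)\<bar> * \<bar>snd h\<bar>"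
        by (simp add: abs_mult abs_triangle_ineq order_trans[OF abs_triangle_ineq])
      also have "\<dots> \<le> \<bar>pdx f (fst w) (snd w)\<bar> * norm h + \<bar>pdp f (fst w) (snd w)\<bar> * norm h"
        using norm_fst_le[of "fst h" "snd h"] norm_snd_le[of "snd h" "fst h"]
        by (intro add_mono mult_left_mono) auto
      also have "\<dots> \<le> N * norm h" using N w
        by (simp add: distrib_right[symmetric] mult_right_mono)
      finally show "norm (pdx f (fst w) (snd w) * fst h + pdp f (fst w) (snd w) * snd h) \<le> N * norm h" .
    qed
  qed
  then show ?thesis by (intro exI[of _ N]) (simp add: real_norm_def)
qed

lemma vd_fst:
  assumes "(z has_vector_derivative v) F"
  shows "((\<lambda>t. fst (z t)) has_real_derivative fst v) F"
proof -
  have "(z has_derivative (\<lambda>h. h *\<^sub>R v)) F" using assms by (simp add: has_vector_derivative_def)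
  from has_derivative_fst[OF this] have "((\<lambda>t. fst (z t)) has_derivative (\<lambda>h. h * fst v)) F" by simp
  moreover have "(\<lambda>h. h * fst v) = (*) (fst v)" by (auto simp: mult.commute)
  ultimately show ?thesis by (simp add: has_field_derivative_def)
qed

lemma vd_snd:
  assumes "(z has_vector_derivative v) F"
  shows "((\<lambda>t. snd (z t)) has_real_derivative snd v) F"
proof -
  have "(z has_derivative (\<lambda>h. h *\<^sub>R v)) F" using assms by (simp add: has_vector_derivative_def)
  from has_derivative_snd[OF this] have "((\<lambda>t. snd (z t)) has_derivative (\<lambda>h. h * snd v)) F" by simp
  moreover have "(\<lambda>h. h * snd v) = (*) (snd v)" by (auto simp: mult.commute)
  ultimately show ?thesis by (simp add: has_field_derivative_def)
qed

locale hs =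
  fixes b :: bool and H :: "real \<Rightarrow> real \<Rightarrow> real" and U :: "(real \<times> real) set"
  assumes U_open: "open U" and KU: "\<And>x q. x \<in> Kset b \<Longrightarrow> (x, q) \<in> U"
    and C2: "C2_on U H" and cH: "conditionH b H"
begin

lemma C1H: "C1_on U H" and C1x: "C1_on U (pdx H)" and C1p: "C1_on U (pdp H)"
  using C2 by (auto simp: C2_on_def)

lemma local_exist:
  assumes w0: "(x0, p0) \<in> U" and \<rho>: "\<rho> > 0"
  shows "\<exists>\<delta>>0. \<exists>Y Q. Y 0 = x0 \<and> Q 0 = p0 \<and>
    (\<forall>t\<in>{0..\<delta>}. (Y has_real_derivative pdp H (Y t) (Q t)) (at t within {0..\<delta>})
        \<and> (Q has_real_derivative - pdx H (Y t) (Q t)) (at t within {0..\<delta>})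
        \<and> \<bar>Y t - x0\<bar> \<le> \<rho>)"
proof -
  obtain r where r: "r > 0" "cball (x0, p0) r \<subseteq> U"
    using U_open w0 open_contains_cball by blast
  define r' where "r' = min r \<rho>"
  have r': "r' > 0" using r \<rho> by (simp add: r'_def)
  define S where "S = cball (x0, p0) r'"
  have SU: "S \<subseteq> U" using r by (auto simp: S_def r'_def)
  have Sc: "convex S" "compact S" "closed S" "S \<noteq> {}" using r' by (auto simp: S_def)
  define F where "F w = (pdp H (fst w) (snd w), - pdx H (fst w) (snd w))" for w :: "real \<times> real"
  obtain N1 where N1: "\<forall>u\<in>S. \<forall>v\<in>S. \<bar>pdp H (fst u) (snd u) - pdp H (fst v) (snd v)\<bar> \<le> N1 * norm (u - v)"
    using C1_lip[OF C1p Sc(1,2) SU] by blast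
  obtain N2 where N2: "\<forall>u\<in>S. \<forall>v\<in>S. \<bar>pdx H (fst u) (snd u) - pdx H (fst v) (snd v)\<bar> \<le> N2 * norm (u - v)"
    using C1_lip[OF C1x Sc(1,2) SU] by blast
  define L where "L = \<bar>N1\<bar> + \<bar>N2\<bar>"
  have L0: "L \<ge> 0" by (simp add: L_def)
  have FL: "norm (F u - F v) \<le> L * norm (u - v)" if "u \<in> S" "v \<in> S" for u v
  proof -
    have "norm (F u - F v) \<le> norm (pdp H (fst u) (snd u) - pdp H (fst v) (snd v)) + norm (pdx H (fst v) (snd v) - pdx H (fst u) (snd u))"
      using norm_Pair_le[of "pdp H (fst u) (snd u) - pdp H (fst v) (snd v)" "pdx H (fst v) (snd v) - pdx H (fst u) (snd u)"]
      by (simp add: F_def)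
    also have "\<dots> \<le> N1 * norm (u - v) + N2 * norm (u - v)"
      using N1 N2 that by (auto intro!: add_mono simp: abs_minus_commute[of "pdx H (fst v) (snd v)"])
    also have "\<dots> \<le> L * norm (u - v)" unfolding L_def
      by (simp add: distrib_right[symmetric] mult_right_mono)
    finally show ?thesis .
  qed
  have Fc: "continuous_on S F" unfolding F_def
    using continuous_on_subset[OF C1_cont[OF C1p] SU] continuous_on_subset[OF C1_cont[OF C1x] SU]
    by (intro continuous_intros) auto
  obtain B where B: "B > 0" "\<forall>w\<in>S. norm (F w) \<le> B" using cont_bound[OF Sc(2) Fc] by blast
  define G where "G w = F (closest_point S w)" for w
  have cpS: "closest_point S w \<in> S" for w using closest_point_in_set[OF Sc(3,4)] .
  have Gc: "continuous_on UNIV G" unfolding G_def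
    by (rule continuous_on_compose2[OF Fc continuous_on_closest_point[OF Sc(1,3,4)]]) (use cpS in auto)
  have GL: "norm (G u - G v) \<le> L * norm (u - v)" for u v
  proof -
    have "norm (G u - G v) \<le> L * norm (closest_point S u - closest_point S v)"
      unfolding G_def by (rule FL[OF cpS cpS])
    also have "\<dots> \<le> L * norm (u - v)"
      using closest_point_lipschitz[OF Sc(1,3,4), of u v] L0 by (simp add: dist_norm mult_left_mono)
    finally show ?thesis .
  qed
  have GB: "norm (G u) \<le> B" for u using B cpS by (simp add: G_def)
  define \<delta> where "\<delta> = min (1 / (2 * L + 2)) (r' / B)"
  have \<delta>: "\<delta> > 0" using L0 r' B by (simp add: \<delta>_def)
  have "\<delta> * L \<le> (1 / (2 * L + 2)) * L" using L0 by (intro mult_right_mono) (auto simp: \<delta>_def)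
  also have "\<dots> < 1" using L0 by (simp add: field_simps)
  finally have \<delta>L: "\<delta> * L < 1" .
  obtain z where z0: "z 0 = (x0, p0)" and z: "\<forall>t\<in>{0..\<delta>}. (z has_vector_derivative G (z t)) (at t within {0..\<delta>})
           \<and> norm (z t - (x0, p0)) \<le> B * t"
    using picard_global[OF Gc GL L0 GB \<delta> \<delta>L, of "(x0,p0)"] by blast
  have zS: "z t \<in> S" if "t \<in> {0..\<delta>}" for t
  proof -
    have "B * t \<le> B * (r' / B)" using that B by (intro mult_left_mono) (auto simp: \<delta>_def)
    then have "norm (z t - (x0, p0)) \<le> r'" using z that B by force
    then show ?thesis by (simp add: S_def dist_norm norm_minus_commute)
  qed
  show ?thesis
  proof (intro exI conjI ballI)
    show "\<delta> > 0" by (rule \<delta>)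
    show "fst (z 0) = x0" "snd (z 0) = p0" using z0 by auto
    fix t assume t: "t \<in> {0..\<delta>}"
    have e: "G (z t) = F (z t)" using zS[OF t] by (simp add: G_def closest_point_self)
    have zd: "(z has_vector_derivative F (z t)) (at t within {0..\<delta>})" using z t e by metis
    show "((\<lambda>t. fst (z t)) has_real_derivative pdp H (fst (z t)) (snd (z t))) (at t within {0..\<delta>})"
      using vd_fst[OF zd] by (simp add: F_def)
    show "((\<lambda>t. snd (z t)) has_real_derivative - pdx H (fst (z t)) (snd (z t))) (at t within {0..\<delta>})"
      using vd_snd[OF zd] by (simp add: F_def)
    have "dist (z t) (x0, p0) \<le> r'" using zS[OF t] by (simp add: S_def dist_commute)
    then have "\<bar>fst (z t) - x0\<bar> \<le> r'"
      using dist_fst_le[of "z t" "(x0,p0)"] by (simp add: dist_real_def)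
    then show "\<bar>fst (z t) - x0\<bar> \<le> \<rho>" by (simp add: r'_def)
  qed
qed

end


lemma ev_nhds_lt: "v < (T::real) \<Longrightarrow> eventually (\<lambda>w. w < T) (nhds v)"
  using eventually_nhds_in_open[of "{..<T}" v] by auto

lemma deriv_left_limit:
  fixes f g :: "real \<Rightarrow> real"
  assumes aT: "a < T" and d: "\<And>s. a < s \<Longrightarrow> s < T \<Longrightarrow> (f has_real_derivative g s) (at s)"
    and fl: "(f \<longlongrightarrow> L) (at_left T)" and gl: "(g \<longlongrightarrow> D) (at_left T)"
  shows "((\<lambda>u. (f u - L) / (u - T)) \<longlongrightarrow> D) (at_left T)"
proof (rule tendstoI)
  fix e :: real assume e: "e > 0"
  from tendstoD[OF gl e] obtain c where c: "c < T" "\<forall>y>c. y < T \<longrightarrow> dist (g y) D < e"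
    by (auto simp: eventually_at_left_field)
  show "eventually (\<lambda>u. dist ((f u - L) / (u - T)) D < e) (at_left T)"
    unfolding eventually_at_left_field
  proof (intro exI[of _ "max a c"] conjI allI impI)
    show "max a c < T" using aT c by auto
    fix u assume u: "max a c < u" "u < T"
    define h where "h v = (if v < T then f v else L)" for v
    have hd: "(h has_real_derivative g z) (at z)" if "u < z" "z < T" for z
      by (rule has_field_derivative_transform_within_open[OF d[of z] open_lessThan[of T]])
         (use that u in \<open>auto simp: h_def\<close>)
    have hc: "continuous_on {u..T} h"
      unfolding continuous_on_eq_continuous_within
    proof
      fix v assume v: "v \<in> {u..T}"
      show "continuous (at v within {u..T}) h"
      proof (cases "v < T")
        case True
        have "isCont f v" using d[of v] u v True by (auto intro: DERIV_isCont)
        moreover have "eventually (\<lambda>w. f w = h w) (nhds v)"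
          using ev_nhds_lt[OF True] by eventually_elim (simp add: h_def)
        ultimately have "isCont h v" using isCont_cong by blast
        then show ?thesis by (rule continuous_at_imp_continuous_at_within)
      next
        case False
        then have vT: "v = T" using v by auto
        have ev: "eventually (\<lambda>w. f w = h w) (at_left T)"
          unfolding eventually_at_left_field using u by (auto simp: h_def intro!: exI[of _ u])
        have "(h \<longlongrightarrow> L) (at_left T)" using fl tendsto_cong[OF ev] by simp
        then show ?thesis using vT u
          by (simp add: continuous_within at_within_Icc_at_left h_def)
      qed
    qed
    have "\<And>z. u < z \<Longrightarrow> z < T \<Longrightarrow> h differentiable (at z)"
      using hd real_differentiable_def by blast
    then obtain l z where z: "u < z" "z < T" "DERIV h z :> l" "h T - h u = (T - u) * l"
      using MVT[OF u(2) hc] by blast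
    have "l = g z" using DERIV_unique[OF z(3) hd[OF z(1,2)]] .
    then have "(f u - L) / (u - T) = g z" using z u by (simp add: h_def field_simps)
    then show "dist ((f u - L) / (u - T)) D < e" using c z u by auto
  qed
qed

lemma glue_deriv:
  fixes A B dA dB :: "real \<Rightarrow> real"
  assumes T: "T > 0" and \<delta>: "\<delta> > 0"
    and dA: "\<And>s. s \<in> {0..<T} \<Longrightarrow> (A has_real_derivative dA s) (at s within {0..<T})"
    and dB: "\<And>t. t \<in> {0..\<delta>} \<Longrightarrow> (B has_real_derivative dB t) (at t within {0..\<delta>})"
    and lA: "(A \<longlongrightarrow> B 0) (at_left T)" and ldA: "(dA \<longlongrightarrow> dB 0) (at_left T)"
    and s: "s \<in> {0..<T+\<delta>}"
  shows "((\<lambda>u. if u < T then A u else B (u - T)) has_real_derivative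
          (if s < T then dA s else dB (s - T))) (at s within {0..<T+\<delta>})"
proof -
  define G where "G u = (if u < T then A u else B (u - T))" for u
  have "(G has_real_derivative (if s < T then dA s else dB (s - T))) (at s within {0..<T+\<delta>})"
  proof (cases "s < T")
    case True
    have eq: "at s within {0..<T+\<delta>} = at s within {0..<T}"
      by (rule at_within_nhd[of s "{..<T}"]) (use True \<delta> in auto)
    have "(A has_real_derivative dA s) (at s within {0..<T+\<delta>})" using dA[of s] s True eq by simp
    then have "(G has_real_derivative dA s) (at s within {0..<T+\<delta>})"
      by (rule has_field_derivative_transform_within[where d="T - s"])
         (use True s in \<open>auto simp: G_def dist_real_def\<close>)
    then show ?thesis using True by simp
  next
    case False
    show ?thesis
    proof (cases "s = T")
      case False
      then have sT: "s > T" using \<open>\<not> s < T\<close> by auto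
      have t: "s - T \<in> interior {0..\<delta>}" using sT s by auto
      have Bd: "(B has_real_derivative dB (s - T)) (at ((\<lambda>u. u - T) s))"
        using dB[of "s - T"] at_within_interior[OF t] sT s by auto
      have gd: "((\<lambda>u. u - T) has_real_derivative 1) (at s)"
        by (auto intro!: derivative_eq_intros)
      from DERIV_chain2[OF Bd gd]
      have "((\<lambda>u. B (u - T)) has_real_derivative dB (s - T)) (at s)" by simp
      then have "((\<lambda>u. B (u - T)) has_real_derivative dB (s - T)) (at s within {0..<T+\<delta>})"
        by (rule has_field_derivative_at_within)
      then have "(G has_real_derivative dB (s - T)) (at s within {0..<T+\<delta>})"
        by (rule has_field_derivative_transform_within[where d="s - T"])
           (use sT s in \<open>auto simp: G_def dist_real_def\<close>)
      then show ?thesis using sT by simp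
    next
      case True
      have GT: "G T = B 0" by (simp add: G_def)
      have un: "{0..<T+\<delta>} = {0..<T} \<union> {T..<T+\<delta>}" using T \<delta> by auto
      have left: "((\<lambda>u. (G u - G T) / (u - T)) \<longlongrightarrow> dB 0) (at T within {0..<T})"
      proof -
        have eq: "at T within {0..<T} = at_left T"
          by (rule at_within_nhd[of T "{0<..}"]) (use T in auto)
        have d': "(A has_real_derivative dA s') (at s')" if "0 < s'" "s' < T" for s'
          using dA[of s'] at_within_interior[of s' "{0..<T}"] that by auto
        have lim: "((\<lambda>u. (A u - B 0) / (u - T)) \<longlongrightarrow> dB 0) (at_left T)"
          by (rule deriv_left_limit[OF T d' lA ldA])
        have ev: "eventually (\<lambda>u. (A u - B 0) / (u - T) = (G u - G T) / (u - T)) (at_left T)"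
          unfolding eventually_at_left_field using T by (auto simp: G_def intro!: exI[of _ 0])
        show ?thesis unfolding eq using lim tendsto_cong[OF ev] by simp
      qed
      have right: "((\<lambda>u. (G u - G T) / (u - T)) \<longlongrightarrow> dB 0) (at T within {T..<T+\<delta>})"
      proof -
        have img: "(\<lambda>u. u - T) ` {T..<T+\<delta>} = {0..<\<delta>}"
        proof
          show "(\<lambda>u. u - T) ` {T..<T + \<delta>} \<subseteq> {0..<\<delta>}" by auto
          show "{0..<\<delta>} \<subseteq> (\<lambda>u. u - T) ` {T..<T + \<delta>}"
          proof
            fix y assume "y \<in> {0..<\<delta>}"
            then show "y \<in> (\<lambda>u. u - T) ` {T..<T + \<delta>}" by (intro image_eqI[of _ _ "y + T"]) auto
          qed
        qed
        have "(B has_real_derivative dB 0) (at 0 within {0..<\<delta>})"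
          using dB[of 0] \<delta> by (auto intro: DERIV_subset)
        then have "(B has_real_derivative dB 0) (at ((\<lambda>u. u - T) T) within ((\<lambda>u. u - T) ` {T..<T+\<delta>}))"
          by (simp add: img)
        moreover have "((\<lambda>u. u - T) has_real_derivative 1) (at T within {T..<T+\<delta>})"
          by (rule has_field_derivative_at_within) (auto intro!: derivative_eq_intros)
        ultimately have "(B \<circ> (\<lambda>u. u - T) has_real_derivative dB 0 * 1) (at T within {T..<T+\<delta>})"
          by (rule DERIV_image_chain)
        then have "((\<lambda>u. B (u - T)) has_real_derivative dB 0) (at T within {T..<T+\<delta>})"
          by (simp add: o_def)
        then have "(G has_real_derivative dB 0) (at T within {T..<T+\<delta>})"
          by (rule has_field_derivative_transform_within[where d=1])
             (use \<delta> in \<open>auto simp: G_def\<close>)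
        then show ?thesis by (simp add: has_field_derivative_iff)
      qed
      have "((\<lambda>u. (G u - G T) / (u - T)) \<longlongrightarrow> dB 0) (at T within {0..<T+\<delta>})"
        unfolding un Lim_within_Un using left right by blast
      then show ?thesis using True by (simp add: has_field_derivative_iff)
    qed
  qed
  moreover have "G = (\<lambda>u. if u < T then A u else B (u - T))" by (simp add: G_def fun_eq_iff)
  ultimately show ?thesis by simp
qed


locale hsol = hs +
  fixes x p T :: real and X P :: "real \<Rightarrow> real"
  assumes xK: "x \<in> Kset b" and ms: "ham_maxsol b H x p T X P" and Tpos: "T > 0"
begin

lemma sol: "ham_sol b H x p T X P" using ms by (simp add: ham_maxsol_def)
lemma X0: "X 0 = x" and P0: "P 0 = p" using sol by (auto simp: ham_sol_def)
lemma XK: "s \<in> {0..<T} \<Longrightarrow> X s \<in> Kset b" using sol by (auto simp: ham_sol_def)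
lemma dX: "s \<in> {0..<T} \<Longrightarrow> (X has_real_derivative pdp H (X s) (P s)) (at s within {0..<T})"
  using sol by (auto simp: ham_sol_def)
lemma dP: "s \<in> {0..<T} \<Longrightarrow> (P has_real_derivative - pdx H (X s) (P s)) (at s within {0..<T})"
  using sol by (auto simp: ham_sol_def)
lemma dX_at: "0 < s \<Longrightarrow> s < T \<Longrightarrow> (X has_real_derivative pdp H (X s) (P s)) (at s)"
  using dX[of s] at_within_interior[of s "{0..<T}"] by auto
lemma dP_at: "0 < s \<Longrightarrow> s < T \<Longrightarrow> (P has_real_derivative - pdx H (X s) (P s)) (at s)"
  using dP[of s] at_within_interior[of s "{0..<T}"] by auto
lemma contX: "continuous_on {0..<T} X" using dX by (rule DERIV_continuous_on)
lemma contP: "continuous_on {0..<T} P" using dP by (rule DERIV_continuous_on)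
lemma atT: "at T within {0..<T} = at_left T"
  by (rule at_within_nhd[of T "{0<..}"]) (use Tpos in auto)
lemma XU: "s \<in> {0..<T} \<Longrightarrow> (X s, P s) \<in> U" using XK KU by blast

lemma energy: assumes "s \<in> {0..<T}" shows "H (X s) (P s) = H x p"
proof -
  have d: "((\<lambda>s. H (X s) (P s)) has_real_derivative 0) (at s within {0..<T})" if s: "s \<in> {0..<T}" for s
  proof -
    have "((\<lambda>s. (X s, P s)) has_derivative (\<lambda>h. (pdp H (X s) (P s) * h, (- pdx H (X s) (P s)) * h))) (at s within {0..<T})"
      using dX[OF s] dP[OF s] unfolding has_field_derivative_def by (rule has_derivative_Pair)
    from has_derivative_compose[OF this C1_D[OF C1H XU[OF s]]]
    have "((\<lambda>s. H (X s) (P s)) has_derivative (\<lambda>h. pdx H (X s) (P s) * (pdp H (X s) (P s) * h) + pdp H (X s) (P s) * ((- pdx H (X s) (P s)) * h))) (at s within {0..<T})"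
      by simp
    moreover have "(\<lambda>h. pdx H (X s) (P s) * (pdp H (X s) (P s) * h) + pdp H (X s) (P s) * ((- pdx H (X s) (P s)) * h)) = (*) 0"
      by (auto simp: algebra_simps)
    ultimately show ?thesis by (simp add: has_field_derivative_def)
  qed
  obtain c where "\<forall>s\<in>{0..<T}. H (X s) (P s) = c"
    using has_field_derivative_zero_constant[OF _ d] convex_real_interval by blast
  then show ?thesis using assms Tpos X0 P0 by force
qed

lemma glue:
  assumes lX: "(X \<longlongrightarrow> Y 0) (at_left T)" and lP: "(P \<longlongrightarrow> Q 0) (at_left T)" and \<delta>: "\<delta> > 0"
    and Y: "\<And>t. t \<in> {0..\<delta>} \<Longrightarrow> Y t \<in> Kset b \<and> (Y has_real_derivative pdp H (Y t) (Q t)) (at t within {0..\<delta>})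
          \<and> (Q has_real_derivative - pdx H (Y t) (Q t)) (at t within {0..\<delta>})"
  shows False
proof -
  define X' where "X' u = (if u < T then X u else Y (u - T))" for u
  define P' where "P' u = (if u < T then P u else Q (u - T))" for u
  have ZU: "(Y 0, Q 0) \<in> U" using Y[of 0] \<delta> KU by auto
  have lZ: "((\<lambda>s. (X s, P s)) \<longlongrightarrow> (Y 0, Q 0)) (at_left T)" using lX lP by (rule tendsto_Pair)
  have evU: "eventually (\<lambda>s. (X s, P s) \<in> U) (at_left T)"
    unfolding eventually_at_left_field using Tpos XU by (auto intro!: exI[of _ 0])
  have l1: "((\<lambda>s. pdp H (X s) (P s)) \<longlongrightarrow> pdp H (Y 0) (Q 0)) (at_left T)"
    using continuous_on_tendsto_compose[OF C1_cont[OF C1p] lZ ZU evU] by simp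
  have l2: "((\<lambda>s. - pdx H (X s) (P s)) \<longlongrightarrow> - pdx H (Y 0) (Q 0)) (at_left T)"
    using continuous_on_tendsto_compose[OF C1_cont[OF C1x] lZ ZU evU] by (intro tendsto_minus) simp
  have "ham_sol b H x p (T + \<delta>) X' P'"
    unfolding ham_sol_def
  proof (intro conjI ballI)
    show "X' 0 = x" "P' 0 = p" using Tpos X0 P0 by (auto simp: X'_def P'_def)
    fix s assume s: "s \<in> {0..<T + \<delta>}"
    show "X' s \<in> Kset b" using s XK Y[of "s - T"] by (auto simp: X'_def)
    have "(X' has_real_derivative (if s < T then pdp H (X s) (P s) else pdp H (Y (s - T)) (Q (s - T)))) (at s within {0..<T+\<delta>})"
      unfolding X'_def
      by (rule glue_deriv[where A=X and B=Y and dA="\<lambda>s. pdp H (X s) (P s)" and dB="\<lambda>t. pdp H (Y t) (Q t)", OF Tpos \<delta> dX _ lX l1 s]) (use Y in auto)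
    then show "(X' has_real_derivative pdp H (X' s) (P' s)) (at s within {0..<T + \<delta>})"
      by (simp add: X'_def P'_def split: if_splits)
    have "(P' has_real_derivative (if s < T then - pdx H (X s) (P s) else - pdx H (Y (s - T)) (Q (s - T)))) (at s within {0..<T+\<delta>})"
      unfolding P'_def
      by (rule glue_deriv[where A=P and B=Q and dA="\<lambda>s. - pdx H (X s) (P s)" and dB="\<lambda>t. - pdx H (Y t) (Q t)", OF Tpos \<delta> dP _ lP l2 s]) (use Y in auto)
    then show "(P' has_real_derivative - pdx H (X' s) (P' s)) (at s within {0..<T + \<delta>})"
      by (simp add: X'_def P'_def split: if_splits)
  qed
  moreover have "\<forall>s\<in>{0..<T}. X' s = X s \<and> P' s = P s" by (auto simp: X'_def P'_def)
  ultimately have "\<exists>T' X' P'. T' > T \<and> ham_sol b H x p T' X' P' \<and> (\<forall>s\<in>{0..<T}. X' s = X s \<and> P' s = P s)"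
    using \<delta> by (intro exI[of _ "T + \<delta>"] exI[of _ X'] exI[of _ P']) auto
  then show False using ms unfolding ham_maxsol_def by blast
qed

end


context hs begin

definition mm :: "real \<Rightarrow> real" where "mm y = (ARG_MIN (H y) q. True)"

lemma intK: "interior (Kset b) = (if b then {-1<..<1} else UNIV)"
  by (simp add: Kset_def)

lemma H0: "y \<in> Kset b \<Longrightarrow> H y 0 = 0" using cH by (simp add: conditionH_def condH0_def)

lemma pdpp_pos: "y \<in> Kset b \<Longrightarrow> pdp (pdp H) y q > 0"
  using cH by (simp add: conditionH_def condH1_def)

lemma dpH: "y \<in> Kset b \<Longrightarrow> ((\<lambda>q. H y q) has_real_derivative pdp H y q) (at q)"
  using C1_dp[OF C1H KU] .
lemma dpp: "y \<in> Kset b \<Longrightarrow> ((\<lambda>q. pdp H y q) has_real_derivative pdp (pdp H) y q) (at q)"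
  using C1_dp[OF C1p KU] .

lemma pdp_mono: assumes "y \<in> Kset b" "q1 < q2" shows "pdp H y q1 < pdp H y q2"
  by (rule DERIV_pos_imp_increasing[OF assms(2)]) (use dpp[OF assms(1)] pdpp_pos[OF assms(1)] in blast)

lemma pdp_mono_le: assumes "y \<in> Kset b" "q1 \<le> q2" shows "pdp H y q1 \<le> pdp H y q2"
proof (cases "q1 = q2")
  case False
  then show ?thesis using pdp_mono[OF assms(1), of q1 q2] assms(2) by simp
qed simp

lemma intK_K: "y \<in> interior (Kset b) \<Longrightarrow> y \<in> Kset b"
  using interior_subset by blast

lemma coercive:
  assumes y: "y \<in> interior (Kset b)"
  shows "\<exists>R>0. \<forall>q. R \<le> \<bar>q\<bar> \<longrightarrow> \<bar>q\<bar> \<le> H y q"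
proof -
  have h3: "\<forall>K. compact K \<and> K \<noteq> {} \<and> K \<subseteq> interior (Kset b) \<longrightarrow>
       filterlim (\<lambda>p. (INF x\<in>K. H x p / \<bar>p\<bar>)) at_top at_infinity"
    using cH unfolding conditionH_def condH3_def by blast
  have "filterlim (\<lambda>q. (INF z\<in>{y}. H z q / \<bar>q\<bar>)) at_top at_infinity"
    using h3[rule_format, of "{y}"] y by simp
  then have "filterlim (\<lambda>q. H y q / \<bar>q\<bar>) at_top at_infinity" by simp
  then have "eventually (\<lambda>q. 1 \<le> H y q / \<bar>q\<bar>) at_infinity" by (simp add: filterlim_at_top)
  then obtain c where c: "\<forall>q. c \<le> norm q \<longrightarrow> 1 \<le> H y q / \<bar>q\<bar>" by (auto simp: eventually_at_infinity)
  show ?thesis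
  proof (intro exI[of _ "max c 1"] conjI allI impI)
    fix q :: real assume q: "max c 1 \<le> \<bar>q\<bar>"
    then have "1 \<le> H y q / \<bar>q\<bar>" using c by auto
    then show "\<bar>q\<bar> \<le> H y q" using q by (simp add: field_simps)
  qed simp
qed

lemma mm_min:
  assumes y: "y \<in> interior (Kset b)"
  shows "H y (mm y) \<le> H y q"
proof -
  obtain R where R: "R > 0" "\<forall>q. R \<le> \<bar>q\<bar> \<longrightarrow> \<bar>q\<bar> \<le> H y q" using coercive[OF y] by blast
  have cont: "continuous_on {-R..R} (H y)"
  proof (rule DERIV_continuous_on)
    fix q show "(H y has_real_derivative pdp H y q) (at q within {-R..R})"
      by (rule has_field_derivative_at_within[OF dpH[OF intK_K[OF y]]])
  qed
  obtain q0 where q0: "q0 \<in> {-R..R}" "\<forall>q\<in>{-R..R}. H y q0 \<le> H y q"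
    using continuous_attains_inf[OF compact_Icc _ cont] R by auto
  have glob: "H y q0 \<le> H y q" for q
  proof (cases "q \<in> {-R..R}")
    case False
    then have "R \<le> \<bar>q\<bar>" by auto
    then have "\<bar>q\<bar> \<le> H y q" using R by auto
    moreover have "H y q0 \<le> H y 0" using q0 R by auto
    ultimately show ?thesis using H0[OF intK_K[OF y]] by auto
  qed (use q0 in auto)
  show ?thesis unfolding mm_def
  proof (rule arg_minI[of "\<lambda>_. True" q0 "H y"])
    show "True" ..
    fix z assume "True"
    show "\<not> H y z < H y q0" using glob[of z] by simp
  next
    fix z assume "True" "\<forall>w. True \<longrightarrow> \<not> H y w < H y z"
    then show "H y z \<le> H y q" by (simp add: not_less)
  qed
qed

lemma mm_crit: assumes y: "y \<in> interior (Kset b)" shows "pdp H y (mm y) = 0"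
  by (rule DERIV_local_min[OF dpH[OF intK_K[OF y]], of 1]) (use mm_min[OF y] in auto)

lemma mm_pos: assumes y: "y \<in> interior (Kset b)" "q > mm y" shows "pdp H y q > 0"
  using pdp_mono[OF intK_K[OF y(1)] y(2)] mm_crit[OF y(1)] by simp

lemma mm_neg: assumes y: "y \<in> interior (Kset b)" "q < mm y" shows "pdp H y q < 0"
  using pdp_mono[OF intK_K[OF y(1)] y(2)] mm_crit[OF y(1)] by simp

lemma mm_lt: assumes y: "y \<in> interior (Kset b)" "pdp H y q > 0" shows "q > mm y"
proof (rule ccontr)
  assume "\<not> q > mm y"
  then have "pdp H y q \<le> pdp H y (mm y)" by (intro pdp_mono_le[OF intK_K[OF y(1)]]) simp
  then show False using mm_crit[OF y(1)] y(2) by simp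
qed

lemma mm_gt: assumes y: "y \<in> interior (Kset b)" "pdp H y q < 0" shows "q < mm y"
proof (rule ccontr)
  assume "\<not> q < mm y"
  then have "pdp H y (mm y) \<le> pdp H y q" by (intro pdp_mono_le[OF intK_K[OF y(1)]]) simp
  then show False using mm_crit[OF y(1)] y(2) by simp
qed

lemma mm_eq: "mm = (\<lambda>x. ARG_MIN (H x) p. True)" by (simp add: fun_eq_iff mm_def)

lemma H4: "filterlim mm at_bot (lowerF b)" "filterlim mm at_top (upperF b)"
  using cH unfolding conditionH_def condH4_def mm_eq by blast+

end


context hsol begin

lemma bnd_lower:
  assumes b: "b" and lX: "(X \<longlongrightarrow> -1) (at_left T)" and lP: "(P \<longlongrightarrow> ps) (at_left T)"
  shows False
proof -
  have Kb: "Kset b = {-1..1}" using b by (simp add: Kset_def)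
  have iK: "interior (Kset b) = {-1<..<1}" using b by (simp add: Kset_def)
  have "eventually (\<lambda>y. mm y \<le> ps - 2) (lowerF b)" using H4(1) by (simp add: filterlim_at_bot)
  then obtain d where d: "d > 0" "\<forall>y\<in>{-1..1}. y \<noteq> -1 \<and> dist y (-1) < d \<longrightarrow> mm y \<le> ps - 2"
    using b by (auto simp: lowerF_def eventually_at)
  have e1: "eventually (\<lambda>s. dist (X s) (-1) < min d 1) (at_left T)" using tendstoD[OF lX, of "min d 1"] d by simp
  have e2: "eventually (\<lambda>s. dist (P s) ps < 1) (at_left T)" using tendstoD[OF lP] by simp
  from eventually_conj[OF e1 e2] obtain c where c: "c < T"
    "\<forall>s>c. s < T \<longrightarrow> dist (X s) (-1) < min d 1 \<and> dist (P s) ps < 1"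
    by (auto simp: eventually_at_left_field)
  define s0 where "s0 = max c (T/2)"
  have s0: "0 < s0" "s0 < T" using c Tpos by (auto simp: s0_def)
  have XK': "-1 \<le> X s \<and> X s \<le> 1" if "0 \<le> s" "s < T" for s using XK[of s] that Kb by auto
  have near: "X s < 0 \<and> P s > ps - 1 \<and> (X s \<noteq> -1 \<longrightarrow> mm (X s) \<le> ps - 2)" if "s0 < s" "s < T" for s
  proof -
    have "dist (X s) (-1) < min d 1" "dist (P s) ps < 1" using c that by (auto simp: s0_def)
    then show ?thesis using d XK'[of s] that s0 by (auto simp: dist_real_def)
  qed
  have dnn: "pdp H (X s) (P s) \<ge> 0" if s: "s0 < s" "s < T" for s
  proof (cases "X s = -1")
    case True
    have "\<forall>y. \<bar>s - y\<bar> < min s (T - s) \<longrightarrow> X s \<le> X y"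
      using XK' True s s0 by auto
    from DERIV_local_min[OF dX_at _ this] s s0 show ?thesis by auto
  next
    case False
    have "X s \<in> interior (Kset b)" using XK'[of s] near[OF s] False s s0 iK by auto
    then show ?thesis using mm_pos[of "X s" "P s"] near[OF s] False by auto
  qed
  have mono: "X s \<le> X u" if "s0 < s" "s \<le> u" "u < T" for s u
  proof (rule DERIV_nonneg_imp_nondecreasing[OF that(2)])
    fix y assume y: "s \<le> y" "y \<le> u"
    then have yy: "0 < y" "y < T" "s0 < y" using that s0 by auto
    show "\<exists>d. DERIV X y :> d \<and> 0 \<le> d" using dX_at[OF yy(1,2)] dnn[OF yy(3,2)] by blast
  qed
  have Xe: "X s = -1" if s: "s0 < s" "s < T" for s
  proof -
    have "eventually (\<lambda>u. X s \<le> X u) (at_left T)"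
      unfolding eventually_at_left_field using s mono by (intro exI[of _ s]) auto
    then have "X s \<le> -1" using tendsto_upperbound[OF lX] by (metis tendsto_lowerbound[OF lX] trivial_limit_at_left_real)
    then show ?thesis using XK'[of s] s s0 by auto
  qed
  have pz: "pdp H (-1) (P s) = 0" if s: "s0 < s" "s < T" for s
  proof -
    have "(X has_real_derivative 0) (at s)"
      by (rule has_field_derivative_transform_within_open[OF DERIV_const[of "-1"] open_greaterThanLessThan[of s0 T]])
         (use s Xe in auto)
    from DERIV_unique[OF dX_at this] s s0 Xe[OF s] show ?thesis by auto
  qed
  define sm where "sm = (s0 + T) / 2"
  have sm: "s0 < sm" "sm < T" using s0 by (auto simp: sm_def)
  define c0 where "c0 = P sm"
  have m1: "-1 \<in> Kset b" using Kb by simp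
  have Pc: "P s = c0" if s: "s0 < s" "s < T" for s
  proof (rule ccontr)
    assume ne: "P s \<noteq> c0"
    have "pdp H (-1) (P s) \<noteq> pdp H (-1) c0"
      using pdp_mono[OF m1, of "P s" c0] pdp_mono[OF m1, of c0 "P s"] ne
      by (cases "P s < c0") auto
    then show False using pz[OF s] pz[OF sm] by (simp add: c0_def)
  qed
  have pxz: "pdx H (-1) c0 = 0"
  proof -
    have "(P has_real_derivative 0) (at sm)"
      by (rule has_field_derivative_transform_within_open[OF DERIV_const[of c0] open_greaterThanLessThan[of s0 T]])
         (use sm Pc in auto)
    from DERIV_unique[OF dP_at this] sm s0 Xe[OF sm] show ?thesis by (auto simp: c0_def)
  qed
  have pz0: "pdp H (-1) c0 = 0" using pz[OF sm] by (simp add: c0_def)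
  have lP': "(P \<longlongrightarrow> c0) (at_left T)"
    by (rule tendsto_eventually) (use Pc s0 in \<open>auto simp: eventually_at_left_field intro!: exI[of _ s0]\<close>)
  show False
  proof (rule glue[where Y="\<lambda>t. -1" and Q="\<lambda>t. c0" and \<delta>=1])
    show "(X \<longlongrightarrow> -1) (at_left T)" by (rule lX)
    show "(P \<longlongrightarrow> c0) (at_left T)" by (rule lP')
    fix t :: real assume "t \<in> {0..1}"
    show "-1 \<in> Kset b \<and> ((\<lambda>t. -1) has_real_derivative pdp H (-1) c0) (at t within {0..1})
          \<and> ((\<lambda>t. c0) has_real_derivative - pdx H (-1) c0) (at t within {0..1})"
      using m1 pz0 pxz by auto
  qed simp
qed

lemma bnd_upper:
  assumes b: "b" and lX: "(X \<longlongrightarrow> 1) (at_left T)" and lP: "(P \<longlongrightarrow> ps) (at_left T)"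
  shows False
proof -
  have Kb: "Kset b = {-1..1}" using b by (simp add: Kset_def)
  have iK: "interior (Kset b) = {-1<..<1}" using b by (simp add: Kset_def)
  have "eventually (\<lambda>y. ps + 2 \<le> mm y) (upperF b)" using H4(2) by (simp add: filterlim_at_top)
  then obtain d where d: "d > 0" "\<forall>y\<in>{-1..1}. y \<noteq> 1 \<and> dist y 1 < d \<longrightarrow> ps + 2 \<le> mm y"
    using b by (auto simp: upperF_def eventually_at)
  have e1: "eventually (\<lambda>s. dist (X s) 1 < min d 1) (at_left T)" using tendstoD[OF lX, of "min d 1"] d by simp
  have e2: "eventually (\<lambda>s. dist (P s) ps < 1) (at_left T)" using tendstoD[OF lP] by simp
  from eventually_conj[OF e1 e2] obtain c where c: "c < T"
    "\<forall>s>c. s < T \<longrightarrow> dist (X s) 1 < min d 1 \<and> dist (P s) ps < 1"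
    by (auto simp: eventually_at_left_field)
  define s0 where "s0 = max c (T/2)"
  have s0: "0 < s0" "s0 < T" using c Tpos by (auto simp: s0_def)
  have XK': "-1 \<le> X s \<and> X s \<le> 1" if "0 \<le> s" "s < T" for s using XK[of s] that Kb by auto
  have near: "X s > 0 \<and> P s < ps + 1 \<and> (X s \<noteq> 1 \<longrightarrow> ps + 2 \<le> mm (X s))" if "s0 < s" "s < T" for s
  proof -
    have "dist (X s) 1 < min d 1" "dist (P s) ps < 1" using c that by (auto simp: s0_def)
    then show ?thesis using d XK'[of s] that s0 by (auto simp: dist_real_def)
  qed
  have dnp: "pdp H (X s) (P s) \<le> 0" if s: "s0 < s" "s < T" for s
  proof (cases "X s = 1")
    case True
    have "\<forall>y. \<bar>s - y\<bar> < min s (T - s) \<longrightarrow> (\<lambda>u. - X u) s \<le> (\<lambda>u. - X u) y"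
      using XK' True s s0 by auto
    from DERIV_local_min[OF DERIV_minus[OF dX_at] _ this] s s0 show ?thesis by auto
  next
    case False
    have "X s \<in> interior (Kset b)" using XK'[of s] near[OF s] False s s0 iK by auto
    then show ?thesis using mm_neg[of "X s" "P s"] near[OF s] False by auto
  qed
  have mono: "X u \<le> X s" if "s0 < s" "s \<le> u" "u < T" for s u
  proof (rule DERIV_nonpos_imp_nonincreasing[OF that(2)])
    fix y assume y: "s \<le> y" "y \<le> u"
    then have yy: "0 < y" "y < T" "s0 < y" using that s0 by auto
    show "\<exists>d. DERIV X y :> d \<and> d \<le> 0" using dX_at[OF yy(1,2)] dnp[OF yy(3,2)] by blast
  qed
  have Xe: "X s = 1" if s: "s0 < s" "s < T" for s
  proof -
    have "eventually (\<lambda>u. X u \<le> X s) (at_left T)"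
      unfolding eventually_at_left_field using s mono by (intro exI[of _ s]) auto
    then have "1 \<le> X s" by (metis tendsto_upperbound[OF lX] trivial_limit_at_left_real)
    then show ?thesis using XK'[of s] s s0 by auto
  qed
  have pz: "pdp H 1 (P s) = 0" if s: "s0 < s" "s < T" for s
  proof -
    have "(X has_real_derivative 0) (at s)"
      by (rule has_field_derivative_transform_within_open[OF DERIV_const[of "1"] open_greaterThanLessThan[of s0 T]])
         (use s Xe in auto)
    from DERIV_unique[OF dX_at this] s s0 Xe[OF s] show ?thesis by auto
  qed
  define sm where "sm = (s0 + T) / 2"
  have sm: "s0 < sm" "sm < T" using s0 by (auto simp: sm_def)
  define c0 where "c0 = P sm"
  have m1: "1 \<in> Kset b" using Kb by simp
  have Pc: "P s = c0" if s: "s0 < s" "s < T" for s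
  proof (rule ccontr)
    assume ne: "P s \<noteq> c0"
    have "pdp H 1 (P s) \<noteq> pdp H 1 c0"
      using pdp_mono[OF m1, of "P s" c0] pdp_mono[OF m1, of c0 "P s"] ne
      by (cases "P s < c0") auto
    then show False using pz[OF s] pz[OF sm] by (simp add: c0_def)
  qed
  have pxz: "pdx H 1 c0 = 0"
  proof -
    have "(P has_real_derivative 0) (at sm)"
      by (rule has_field_derivative_transform_within_open[OF DERIV_const[of c0] open_greaterThanLessThan[of s0 T]])
         (use sm Pc in auto)
    from DERIV_unique[OF dP_at this] sm s0 Xe[OF sm] show ?thesis by (auto simp: c0_def)
  qed
  have pz0: "pdp H 1 c0 = 0" using pz[OF sm] by (simp add: c0_def)
  have lP': "(P \<longlongrightarrow> c0) (at_left T)"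
    by (rule tendsto_eventually) (use Pc s0 in \<open>auto simp: eventually_at_left_field intro!: exI[of _ s0]\<close>)
  show False
  proof (rule glue[where Y="\<lambda>t. 1" and Q="\<lambda>t. c0" and \<delta>=1])
    show "(X \<longlongrightarrow> 1) (at_left T)" by (rule lX)
    show "(P \<longlongrightarrow> c0) (at_left T)" by (rule lP')
    fix t :: real assume "t \<in> {0..1}"
    show "1 \<in> Kset b \<and> ((\<lambda>t. 1) has_real_derivative pdp H 1 c0) (at t within {0..1})
          \<and> ((\<lambda>t. c0) has_real_derivative - pdx H 1 c0) (at t within {0..1})"
      using m1 pz0 pxz by auto
  qed simp
qed

end


lemma mvt_bound:
  fixes f f' :: "real \<Rightarrow> real"
  assumes ac: "a < c" and cont: "continuous_on {a..c} f"
    and d: "\<And>z. a < z \<Longrightarrow> z < c \<Longrightarrow> (f has_real_derivative f' z) (at z) \<and> \<bar>f' z\<bar> \<le> V"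
  shows "\<bar>f c - f a\<bar> \<le> V * (c - a)"
proof -
  have "\<And>z. a < z \<Longrightarrow> z < c \<Longrightarrow> f differentiable (at z)"
    using d real_differentiable_def by blast
  then obtain l z where z: "a < z" "z < c" "DERIV f z :> l" "f c - f a = (c - a) * l"
    using MVT[OF ac cont] by blast
  have "l = f' z" using DERIV_unique[OF z(3)] d[OF z(1,2)] by blast
  then have "\<bar>f c - f a\<bar> = (c - a) * \<bar>f' z\<bar>" using z ac by (simp add: abs_mult)
  also have "\<dots> \<le> (c - a) * V" using d[OF z(1,2)] ac by (intro mult_left_mono) auto
  finally show ?thesis by (simp add: mult.commute)
qed

context hsol begin

lemma lim_contra:
  assumes lX: "(X \<longlongrightarrow> xs) (at_left T)" and lP: "(P \<longlongrightarrow> ps) (at_left T)"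
  shows False
proof -
  have evT: "eventually (\<lambda>s. 0 \<le> s \<and> s < T) (at_left T)"
    unfolding eventually_at_left_field using Tpos by (auto intro!: exI[of _ 0])
  show False
  proof (cases "b \<and> (xs = -1 \<or> xs = 1)")
    case True
    then show False using bnd_lower[OF _ _ lP] bnd_upper[OF _ _ lP] lX by auto
  next
    case False
    have "\<exists>\<rho>>0. \<forall>y. \<bar>y - xs\<bar> \<le> \<rho> \<longrightarrow> y \<in> Kset b"
    proof (cases b)
      case True
      have "eventually (\<lambda>s. -1 \<le> X s) (at_left T)" "eventually (\<lambda>s. X s \<le> 1) (at_left T)"
        using evT XK True by (auto simp: Kset_def elim!: eventually_mono)
      then have "-1 \<le> xs" "xs \<le> 1"
        using tendsto_lowerbound[OF lX] tendsto_upperbound[OF lX] by auto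
      then have "-1 < xs" "xs < 1" using False True by auto
      show ?thesis
      proof (intro exI[of _ "min (xs + 1) (1 - xs)"] conjI allI impI)
        show "min (xs + 1) (1 - xs) > 0" using \<open>-1 < xs\<close> \<open>xs < 1\<close> by auto
        fix y assume y: "\<bar>y - xs\<bar> \<le> min (xs + 1) (1 - xs)"
        have a: "y - xs \<le> \<bar>y - xs\<bar>" "xs - y \<le> \<bar>y - xs\<bar>" by auto
        have m: "min (xs + 1) (1 - xs) \<le> xs + 1" "min (xs + 1) (1 - xs) \<le> 1 - xs" by auto
        define r where "r = \<bar>y - xs\<bar>"
        define mn where "mn = min (xs + 1) (1 - xs)"
        have rr: "xs - y \<le> r" "y - xs \<le> r" "r \<le> mn" "mn \<le> xs + 1" "mn \<le> 1 - xs"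
          using y a m by (auto simp: r_def mn_def)
        have "-1 \<le> y" using rr by linarith
        moreover have "y \<le> 1" using rr by linarith
        ultimately
        show "y \<in> Kset b" using True \<open>-1 < xs\<close> \<open>xs < 1\<close> by (auto simp: Kset_def)
      qed
    qed (auto simp: Kset_def intro!: exI[of _ 1])
    then obtain \<rho> where \<rho>: "\<rho> > 0" "\<forall>y. \<bar>y - xs\<bar> \<le> \<rho> \<longrightarrow> y \<in> Kset b" by blast
    have "(xs, ps) \<in> U" using \<rho> KU by auto
    from local_exist[OF this \<rho>(1)] obtain \<delta> Y Q where
      Y: "\<delta> > 0" "Y 0 = xs" "Q 0 = ps"
      "\<forall>t\<in>{0..\<delta>}. (Y has_real_derivative pdp H (Y t) (Q t)) (at t within {0..\<delta>})
        \<and> (Q has_real_derivative - pdx H (Y t) (Q t)) (at t within {0..\<delta>}) \<and> \<bar>Y t - xs\<bar> \<le> \<rho>"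
      by blast
    show False
      by (rule glue[where Y=Y and Q=Q and \<delta>=\<delta>]) (use lX lP Y \<rho> in auto)
  qed
qed

lemma escape: "eventually (\<lambda>s. \<not> (\<bar>X s\<bar> \<le> A \<and> \<bar>P s\<bar> \<le> M)) (at_left T)"
proof (rule ccontr)
  assume nev: "\<not> eventually (\<lambda>s. \<not> (\<bar>X s\<bar> \<le> A \<and> \<bar>P s\<bar> \<le> M)) (at_left T)"
  define C' where "C' = ({-(A+1)..A+1} \<inter> Kset b) \<times> {-(M+1)..M+1}"
  have Kcl: "closed (Kset b)" by (simp add: Kset_def)
  have C'c: "compact C'" unfolding C'_def
    by (intro compact_Times compact_Int_closed Kcl) auto
  have C'U: "C' \<subseteq> U" using KU by (auto simp: C'_def)
  have cc: "continuous_on C' (\<lambda>w. \<bar>pdp H (fst w) (snd w)\<bar> + \<bar>pdx H (fst w) (snd w)\<bar>)"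
    using continuous_on_subset[OF C1_cont[OF C1p] C'U] continuous_on_subset[OF C1_cont[OF C1x] C'U]
    by (intro continuous_intros) auto
  obtain V where V: "V > 0" "\<forall>w\<in>C'. norm (\<bar>pdp H (fst w) (snd w)\<bar> + \<bar>pdx H (fst w) (snd w)\<bar>) \<le> V"
    using cont_bound[OF C'c cc] by blast
  have Vb: "\<bar>pdp H (X s) (P s)\<bar> \<le> V \<and> \<bar>pdx H (X s) (P s)\<bar> \<le> V"
    if "0 \<le> s" "s < T" "\<bar>X s\<bar> \<le> A + 1" "\<bar>P s\<bar> \<le> M + 1" for s
  proof -
    have "(X s, P s) \<in> C'" using that XK[of s] by (auto simp: C'_def)
    then show ?thesis using V(2) by fastforce
  qed
  show False
  proof (cases "eventually (\<lambda>s. \<bar>X s\<bar> \<le> A + 1 \<and> \<bar>P s\<bar> \<le> M + 1) (at_left T)")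
    case True
    then obtain c where c: "c < T" "\<forall>s>c. s < T \<longrightarrow> \<bar>X s\<bar> \<le> A + 1 \<and> \<bar>P s\<bar> \<le> M + 1"
      by (auto simp: eventually_at_left_field)
    define s0 where "s0 = max c (T / 2)"
    have s0: "0 < s0" "s0 < T" using c Tpos by (auto simp: s0_def)
    have inC: "\<bar>X s\<bar> \<le> A + 1 \<and> \<bar>P s\<bar> \<le> M + 1" if "s0 < s" "s < T" for s
      using c that by (auto simp: s0_def)
    have lipF: "V-lipschitz_on {s0<..<T} F"
      if F: "F = X \<or> F = P" for F
      unfolding lipschitz_on_def
    proof (intro conjI ballI)
      show "0 \<le> V" using V by simp
      have key: "\<bar>F v - F u\<bar> \<le> V * (v - u)" if uv: "u \<in> {s0<..<T}" "v \<in> {s0<..<T}" "u < v" for u v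
      proof (rule mvt_bound[OF uv(3)])
        have sub: "{u..v} \<subseteq> {0..<T}" using uv s0 by auto
        show "continuous_on {u..v} F"
          using F continuous_on_subset[OF contX sub] continuous_on_subset[OF contP sub] by auto
        fix z assume z: "u < z" "z < v"
        then have zz: "0 < z" "z < T" "s0 < z" using uv s0 by auto
        show "(F has_real_derivative (if F = X then pdp H (X z) (P z) else - pdx H (X z) (P z))) (at z)
              \<and> \<bar>if F = X then pdp H (X z) (P z) else - pdx H (X z) (P z)\<bar> \<le> V"
          using F dX_at[OF zz(1,2)] dP_at[OF zz(1,2)] Vb[of z] inC[OF zz(3,2)] zz by auto
      qed
      fix u v assume uv: "u \<in> {s0<..<T}" "v \<in> {s0<..<T}"
      show "dist (F u) (F v) \<le> V * dist u v"
      proof (cases u v rule: linorder_cases)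
        case less then show ?thesis using key[OF uv less] by (simp add: dist_real_def abs_minus_commute)
      next
        case greater then show ?thesis using key[OF uv(2,1) greater] by (simp add: dist_real_def abs_minus_commute)
      qed simp
    qed
    have clos: "T \<in> closure {s0<..<T}" using s0 by simp
    have atT': "at T within {s0<..<T} = at_left T"
      by (rule at_within_nhd[of T "{s0<..}"]) (use s0 in auto)
    obtain xs where xs: "(X \<longlongrightarrow> xs) (at T within {s0<..<T})"
      using uniformly_continuous_on_extension_at_closure[OF lipschitz_on_uniformly_continuous[OF lipF] clos] by blast
    obtain ps where ps: "(P \<longlongrightarrow> ps) (at T within {s0<..<T})"
      using uniformly_continuous_on_extension_at_closure[OF lipschitz_on_uniformly_continuous[OF lipF] clos] by blast
    show False using lim_contra[of xs ps] xs ps unfolding atT' by blast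
  next
    case False
    define c1 where "c1 = max (T / 2) (T - 1 / (2 * V))"
    have c1: "c1 < T" "0 < c1" using Tpos V by (auto simp: c1_def)
    from nev obtain s1 where s1: "c1 < s1" "s1 < T" "\<bar>X s1\<bar> \<le> A" "\<bar>P s1\<bar> \<le> M"
      unfolding eventually_at_left_field using c1 by blast
    define \<theta> :: real where "\<theta> = 1 / 2"
    have \<theta>: "0 < \<theta>" "\<theta> < 1" by (auto simp: \<theta>_def)
    have Vs1: "V * (T - s1) < \<theta>"
    proof -
      have "T - s1 < 1 / (2 * V)" using s1 by (auto simp: c1_def)
      then have "V * (T - s1) < V * (1 / (2 * V))" using V by (intro mult_strict_left_mono) auto
      then show ?thesis using V by (simp add: \<theta>_def)
    qed
    from False obtain s2 where s2: "s1 < s2" "s2 < T" "\<not> (\<bar>X s2\<bar> \<le> A + 1 \<and> \<bar>P s2\<bar> \<le> M + 1)"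
      unfolding eventually_at_left_field using s1 by (metis not_le)
    define \<phi> where "\<phi> u = max \<bar>X u - X s1\<bar> \<bar>P u - P s1\<bar>" for u
    have s1pos: "0 < s1" using s1 c1 by auto
    have sub: "{s1..s2} \<subseteq> {0..<T}" using s1pos s2 by auto
    have cphi: "continuous_on {s1..s2} \<phi>" unfolding \<phi>_def
      using continuous_on_subset[OF contX sub] continuous_on_subset[OF contP sub]
      by (intro continuous_intros) auto
    define S where "S = {u \<in> {s1..s2}. (\<lambda>_. \<theta>) u \<le> \<phi> u}"
    have Scl: "closed S" unfolding S_def
      by (rule continuous_on_closed_Collect_le[OF continuous_on_const cphi]) simp
    have phis2: "1 \<le> \<phi> s2" using s2(3) s1(3,4) by (auto simp: \<phi>_def)
    have s2S: "s2 \<in> S" using phis2 s2 \<theta> by (auto simp: S_def)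
    define \<tau> where "\<tau> = Inf S"
    have bdd: "bdd_below S" by (auto simp: S_def bdd_below_def)
    have \<tau>S: "\<tau> \<in> S" unfolding \<tau>_def by (rule closed_contains_Inf[OF _ bdd Scl]) (use s2S in auto)
    have \<tau>: "s1 \<le> \<tau>" "\<tau> \<le> s2" "\<theta> \<le> \<phi> \<tau>" using \<tau>S by (auto simp: S_def)
    have \<tau>gt: "s1 < \<tau>" using \<tau> \<theta> by (cases "\<tau> = s1") (auto simp: \<phi>_def)
    have before: "\<phi> u < \<theta>" if "s1 \<le> u" "u < \<tau>" for u
    proof (rule ccontr)
      assume "\<not> \<phi> u < \<theta>"
      then have "u \<in> S" using that \<tau> by (auto simp: S_def)
      then have "\<tau> \<le> u" unfolding \<tau>_def using bdd by (rule cInf_lower)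
      then show False using that by simp
    qed
    have inC: "\<bar>X u\<bar> \<le> A + 1 \<and> \<bar>P u\<bar> \<le> M + 1" if "s1 \<le> u" "u < \<tau>" for u
    proof -
      have "max \<bar>X u - X s1\<bar> \<bar>P u - P s1\<bar> < \<theta>" using before[OF that] unfolding \<phi>_def .
      then have "\<bar>X u - X s1\<bar> < \<theta>" "\<bar>P u - P s1\<bar> < \<theta>" unfolding max_less_iff_conj by auto
      then show ?thesis using s1(3,4) abs_triangle_ineq[of "X u - X s1" "X s1"]
          abs_triangle_ineq[of "P u - P s1" "P s1"] \<theta> by auto
    qed
    have bX: "\<bar>X \<tau> - X s1\<bar> \<le> V * (\<tau> - s1)"
    proof (rule mvt_bound[OF \<tau>gt])
      have sub: "{s1..\<tau>} \<subseteq> {0..<T}" using s1pos \<tau> s2 by auto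
      show "continuous_on {s1..\<tau>} X" using continuous_on_subset[OF contX sub] .
      fix z assume z: "s1 < z" "z < \<tau>"
      then have zz: "0 < z" "z < T" using s1pos \<tau> s2 by auto
      show "(X has_real_derivative pdp H (X z) (P z)) (at z) \<and> \<bar>pdp H (X z) (P z)\<bar> \<le> V"
        using dX_at[OF zz] Vb[of z] inC[of z] z zz by auto
    qed
    have bP: "\<bar>P \<tau> - P s1\<bar> \<le> V * (\<tau> - s1)"
    proof (rule mvt_bound[OF \<tau>gt])
      have sub: "{s1..\<tau>} \<subseteq> {0..<T}" using s1pos \<tau> s2 by auto
      show "continuous_on {s1..\<tau>} P" using continuous_on_subset[OF contP sub] .
      fix z assume z: "s1 < z" "z < \<tau>"
      then have zz: "0 < z" "z < T" using s1pos \<tau> s2 by auto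
      show "(P has_real_derivative - pdx H (X z) (P z)) (at z) \<and> \<bar>- pdx H (X z) (P z)\<bar> \<le> V"
        using dP_at[OF zz] Vb[of z] inC[of z] z zz by auto
    qed
    have "V * (\<tau> - s1) \<le> V * (T - s1)" using V \<tau> s2 by (intro mult_left_mono) auto
    then have "\<bar>X \<tau> - X s1\<bar> < \<theta>" "\<bar>P \<tau> - P s1\<bar> < \<theta>" using bX bP Vs1 by linarith+
    then have "\<phi> \<tau> < \<theta>" by (simp add: \<phi>_def)
    then show False using \<tau> by simp
  qed
qed

end


lemma barrier:
  fixes Pf :: "real \<Rightarrow> real" and G :: "real \<Rightarrow> real \<Rightarrow> real"
  assumes ab: "a < b" and cont: "continuous_on {a..b} Pf"
    and d: "\<And>s. a < s \<Longrightarrow> s < b \<Longrightarrow> (Pf has_real_derivative G s (Pf s)) (at s)"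
    and Gq: "\<And>s. a < s \<Longrightarrow> s < b \<Longrightarrow> G s q \<ge> 0"
    and lip: "\<And>s. a < s \<Longrightarrow> s < b \<Longrightarrow> Pf s \<le> q \<Longrightarrow> G s q - G s (Pf s) \<le> L * (q - Pf s)"
    and start: "q \<le> Pf a"
  shows "q \<le> Pf b"
proof (rule ccontr)
  assume "\<not> q \<le> Pf b"
  then have Pb: "Pf b < q" by simp
  define S where "S = {s \<in> {a..b}. (\<lambda>_. q) s \<le> Pf s}"
  have Scl: "closed S" unfolding S_def
    by (rule continuous_on_closed_Collect_le[OF continuous_on_const cont]) simp
  have aS: "a \<in> S" using start ab by (auto simp: S_def)
  have bdd: "bdd_above S" by (auto simp: S_def bdd_above_def)
  define s1 where "s1 = Sup S"
  have s1S: "s1 \<in> S" unfolding s1_def by (rule closed_contains_Sup[OF _ bdd Scl]) (use aS in auto)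
  have s1: "a \<le> s1" "s1 \<le> b" "q \<le> Pf s1" using s1S by (auto simp: S_def)
  have after: "Pf s < q" if "s1 < s" "s \<le> b" for s
  proof (rule ccontr)
    assume "\<not> Pf s < q"
    then have "s \<in> S" using that s1 by (auto simp: S_def)
    then have "s \<le> s1" unfolding s1_def using bdd by (rule cSup_upper)
    then show False using that by simp
  qed
  have s1b: "s1 < b" using s1 Pb by (cases "s1 = b") auto
  have Ps1: "Pf s1 = q"
  proof -
    have "continuous_on {s1..b} Pf" using continuous_on_subset[OF cont] s1 by auto
    then obtain t where t: "s1 \<le> t" "t \<le> b" "Pf t = q"
      using IVT2'[of Pf b q s1] Pb s1 s1b by auto
    have "t \<le> s1" using after[of t] t by (cases "s1 < t") auto
    then show ?thesis using t by simp
  qed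
  define v where "v s = (q - Pf s) * exp (- L * s)" for s
  have vd: "(v has_real_derivative (- G s (Pf s)) * exp (- L * s) + (q - Pf s) * (exp (- L * s) * (- L))) (at s)"
    if "a < s" "s < b" for s
    unfolding v_def using d[OF that]
    by (auto intro!: derivative_eq_intros)
  have vc: "continuous_on {s1..b} v" unfolding v_def
    using continuous_on_subset[OF cont] s1 by (intro continuous_intros) auto
  have "\<And>z. s1 < z \<Longrightarrow> z < b \<Longrightarrow> v differentiable (at z)"
    using vd s1 real_differentiable_def by (meson le_less_trans)
  then obtain l z where z: "s1 < z" "z < b" "DERIV v z :> l" "v b - v s1 = (b - s1) * l"
    using MVT[OF s1b vc] by blast
  have za: "a < z" using z s1 by auto
  have l: "l = (- G z (Pf z)) * exp (- L * z) + (q - Pf z) * (exp (- L * z) * (- L))"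
    using DERIV_unique[OF z(3) vd[OF za z(2)]] .
  have Pz: "Pf z < q" using after[of z] z by auto
  have "- G z (Pf z) \<le> L * (q - Pf z)" using Gq[OF za z(2)] lip[OF za z(2)] Pz by linarith
  then have "(- G z (Pf z)) * exp (- L * z) \<le> (L * (q - Pf z)) * exp (- L * z)"
    by (intro mult_right_mono) auto
  then have "l \<le> 0" unfolding l by (simp add: algebra_simps)
  then have "v b - v s1 \<le> 0" using z s1b by (simp add: mult_nonneg_nonpos)
  moreover have "v s1 = 0" using Ps1 by (simp add: v_def)
  moreover have "v b > 0" using Pb by (simp add: v_def)
  ultimately show False by simp
qed

lemma barrier_le:
  fixes Pf :: "real \<Rightarrow> real" and G :: "real \<Rightarrow> real \<Rightarrow> real"
  assumes ab: "a < b" and cont: "continuous_on {a..b} Pf"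
    and d: "\<And>s. a < s \<Longrightarrow> s < b \<Longrightarrow> (Pf has_real_derivative G s (Pf s)) (at s)"
    and Gq: "\<And>s. a < s \<Longrightarrow> s < b \<Longrightarrow> G s q \<le> 0"
    and lip: "\<And>s. a < s \<Longrightarrow> s < b \<Longrightarrow> q \<le> Pf s \<Longrightarrow> G s (Pf s) - G s q \<le> L * (Pf s - q)"
    and start: "Pf a \<le> q"
  shows "Pf b \<le> q"
proof -
  have "- q \<le> (\<lambda>s. - Pf s) b"
  proof (rule barrier[where G="\<lambda>s r. - G s (- r)" and L=L, OF ab])
    show "continuous_on {a..b} (\<lambda>s. - Pf s)" using cont by (intro continuous_intros)
    fix s assume s: "a < s" "s < b"
    show "((\<lambda>s. - Pf s) has_real_derivative - G s (- (- Pf s))) (at s)"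
      using DERIV_minus[OF d[OF s]] by simp
    show "0 \<le> - G s (- (- q))" using Gq[OF s] by simp
    assume "- Pf s \<le> - q"
    then show "- G s (- (- q)) - - G s (- (- Pf s)) \<le> L * (- q - - Pf s)"
      using lip[OF s] by simp
  qed (use start in simp)
  then show ?thesis by simp
qed

context hsol begin

lemma sign_lim:
  fixes F :: "real \<Rightarrow> real"
  assumes cF: "continuous_on {0..<T} F" and ev: "\<And>A. eventually (\<lambda>s. A < \<bar>F s\<bar>) (at_left T)"
  shows "filterlim F at_top (at_left T) \<or> filterlim F at_bot (at_left T)"
proof -
  obtain c where c: "c < T" "\<forall>s>c. s < T \<longrightarrow> 1 < \<bar>F s\<bar>"
    using ev[of 1] by (auto simp: eventually_at_left_field)
  define s0 where "s0 = max c (T / 2)"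
  have s0: "0 < s0" "s0 < T" using c Tpos by (auto simp: s0_def)
  have big: "1 < \<bar>F s\<bar>" if "s0 < s" "s < T" for s using c that by (auto simp: s0_def)
  define sm where "sm = (s0 + T) / 2"
  have sm: "s0 < sm" "sm < T" using s0 by (auto simp: sm_def)
  have same: "0 < F s" if pos: "0 < F sm" and s: "s0 < s" "s < T" for s
  proof (rule ccontr)
    assume "\<not> 0 < F s"
    then have neg: "F s < -1" using big[OF s] by auto
    have sb: "{min s sm..max s sm} \<subseteq> {0..<T}" using s sm s0 by auto
    have cc: "continuous_on {min s sm..max s sm} F"
      using continuous_on_subset[OF cF sb] .
    have "\<exists>t. min s sm \<le> t \<and> t \<le> max s sm \<and> F t = 0"
    proof (cases "s \<le> sm")
      case True
      then show ?thesis using IVT'[of F s 0 sm] cc neg pos by auto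
    next
      case False
      then show ?thesis using IVT2'[of F s 0 sm] cc neg pos by auto
    qed
    then obtain t where t: "min s sm \<le> t" "t \<le> max s sm" "F t = 0" by blast
    have "s0 < t" "t < T" using t s sm by auto
    then show False using big t(3) by fastforce
  qed
  have same2: "F s < 0" if neg: "F sm < 0" and s: "s0 < s" "s < T" for s
  proof (rule ccontr)
    assume "\<not> F s < 0"
    then have pos: "1 < F s" using big[OF s] by auto
    have sb: "{min s sm..max s sm} \<subseteq> {0..<T}" using s sm s0 by auto
    have cc: "continuous_on {min s sm..max s sm} F"
      using continuous_on_subset[OF cF sb] .
    have "\<exists>t. min s sm \<le> t \<and> t \<le> max s sm \<and> F t = 0"
    proof (cases "s \<le> sm")
      case True
      then show ?thesis using IVT2'[of F sm 0 s] cc neg pos by auto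
    next
      case False
      then show ?thesis using IVT'[of F sm 0 s] cc neg pos by auto
    qed
    then obtain t where t: "min s sm \<le> t" "t \<le> max s sm" "F t = 0" by blast
    have "s0 < t" "t < T" using t s sm by auto
    then show False using big t(3) by fastforce
  qed
  have evs: "eventually (\<lambda>s. s0 < s \<and> s < T) (at_left T)"
    unfolding eventually_at_left_field using s0 by auto
  show ?thesis
  proof (cases "0 < F sm")
    case True
    have "filterlim F at_top (at_left T)" unfolding filterlim_at_top
    proof
      fix Z
      show "eventually (\<lambda>s. Z \<le> F s) (at_left T)"
        using eventually_conj[OF ev[of "\<bar>Z\<bar>"] evs]
        by eventually_elim (use same[OF True] in fastforce)
    qed
    then show ?thesis ..
  next
    case False
    then have "F sm < 0" using big[OF sm] by auto
    have "filterlim F at_bot (at_left T)" unfolding filterlim_at_bot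
    proof
      fix Z
      show "eventually (\<lambda>s. F s \<le> Z) (at_left T)"
        using eventually_conj[OF ev[of "\<bar>Z\<bar>"] evs]
        by eventually_elim (use same2[OF \<open>F sm < 0\<close>] in fastforce)
    qed
    then show ?thesis ..
  qed
qed

lemma mid_high:
  assumes ac: "a \<le> c" and sub: "{a..c} \<subseteq> interior (Kset b)"
  shows "\<exists>Q\<ge>0. \<forall>y\<in>{a..c}. \<forall>r. Q \<le> \<bar>r\<bar> \<longrightarrow> E < H y r"
proof -
  have h3: "\<forall>K. compact K \<and> K \<noteq> {} \<and> K \<subseteq> interior (Kset b) \<longrightarrow>
       filterlim (\<lambda>p. (INF x\<in>K. H x p / \<bar>p\<bar>)) at_top at_infinity"
    using cH unfolding conditionH_def condH3_def by blast
  have "filterlim (\<lambda>r. (INF y\<in>{a..c}. H y r / \<bar>r\<bar>)) at_top at_infinity"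
    using h3[rule_format, of "{a..c}"] ac sub by auto
  then have "eventually (\<lambda>r. \<bar>E\<bar> + 1 \<le> (INF y\<in>{a..c}. H y r / \<bar>r\<bar>)) at_infinity"
    by (simp add: filterlim_at_top)
  then obtain c0 where c0: "\<forall>r. c0 \<le> norm r \<longrightarrow> \<bar>E\<bar> + 1 \<le> (INF y\<in>{a..c}. H y r / \<bar>r\<bar>)"
    by (auto simp: eventually_at_infinity)
  have KU': "{a..c} \<subseteq> Kset b" using sub interior_subset by blast
  show ?thesis
  proof (intro exI[of _ "max c0 1"] conjI ballI allI impI)
    fix y r assume y: "y \<in> {a..c}" and r: "max c0 1 \<le> \<bar>r\<bar>"
    have cont: "continuous_on {a..c} (\<lambda>y. H y r / \<bar>r\<bar>)"
    proof -
      have "continuous_on {a..c} (\<lambda>y. H (fst (y, r)) (snd (y, r)))"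
        by (rule continuous_on_compose2[OF C1_cont[OF C1H]]) (use KU' KU in \<open>auto intro!: continuous_intros\<close>)
      then show ?thesis using r by (intro continuous_intros) auto
    qed
    have "bdd_below ((\<lambda>y. H y r / \<bar>r\<bar>) ` {a..c})"
      using compact_imp_bounded[OF compact_continuous_image[OF cont compact_Icc]]
      by (rule bounded_imp_bdd_below)
    then have "(INF y\<in>{a..c}. H y r / \<bar>r\<bar>) \<le> H y r / \<bar>r\<bar>" using y by (rule cINF_lower)
    then have "\<bar>E\<bar> + 1 \<le> H y r / \<bar>r\<bar>" using c0 r by force
    then have "(\<bar>E\<bar> + 1) * \<bar>r\<bar> \<le> H y r" using r by (simp add: field_simps)
    moreover have "(\<bar>E\<bar> + 1) * 1 \<le> (\<bar>E\<bar> + 1) * \<bar>r\<bar>" using r by (intro mult_left_mono) auto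
    ultimately have "\<bar>E\<bar> + 1 \<le> H y r" by simp
    then show "E < H y r" using abs_ge_self[of E] by linarith
  qed simp
qed

lemma barrier_app:
  assumes s: "0 < s0" "s0 < s" "s < T" and G: "\<And>t. s0 \<le> t \<Longrightarrow> t \<le> s \<Longrightarrow> - pdx H (X t) q \<ge> 0"
    and st: "q \<le> P s0"
  shows "q \<le> P s"
proof -
  have sub: "{s0..s} \<subseteq> {0..<T}" using s by auto
  have cX: "continuous_on {s0..s} X" and cP: "continuous_on {s0..s} P"
    using continuous_on_subset[OF contX sub] continuous_on_subset[OF contP sub] .
  obtain RX where RX: "RX > 0" "\<forall>t\<in>{s0..s}. norm (X t) \<le> RX" using cont_bound[OF compact_Icc cX] by blast
  obtain RP where RP: "RP > 0" "\<forall>t\<in>{s0..s}. norm (P t) \<le> RP" using cont_bound[OF compact_Icc cP] by blast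
  define Bx where "Bx = ({-RX..RX} \<inter> Kset b) \<times> {-(RP + \<bar>q\<bar>)..RP + \<bar>q\<bar>}"
  have Kcv: "convex (Kset b)" and Kcl: "closed (Kset b)" by (auto simp: Kset_def)
  have Bcv: "convex Bx" unfolding Bx_def by (intro convex_Times convex_Int Kcv) auto
  have Bcp: "compact Bx" unfolding Bx_def by (intro compact_Times compact_Int_closed Kcl) auto
  have BU: "Bx \<subseteq> U" using KU by (auto simp: Bx_def)
  obtain N where N: "\<forall>u\<in>Bx. \<forall>v\<in>Bx. \<bar>pdx H (fst u) (snd u) - pdx H (fst v) (snd v)\<bar> \<le> N * norm (u - v)"
    using C1_lip[OF C1x Bcv Bcp BU] by blast
  show ?thesis
  proof (rule barrier[where G="\<lambda>t r. - pdx H (X t) r" and L=N, OF s(2) cP])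
    fix t assume t: "s0 < t" "t < s"
    show "(P has_real_derivative - pdx H (X t) (P t)) (at t)" using dP_at t s by auto
    show "0 \<le> - pdx H (X t) q" using G t by auto
    assume "P t \<le> q"
    have tt: "t \<in> {s0..s}" using t by auto
    have "\<bar>X t\<bar> \<le> RX" "\<bar>P t\<bar> \<le> RP" using RX(2) RP(2) tt by auto
    then have bx: "-RX \<le> X t" "X t \<le> RX" "-(RP + \<bar>q\<bar>) \<le> P t" "P t \<le> RP + \<bar>q\<bar>"
      "-(RP + \<bar>q\<bar>) \<le> q" "q \<le> RP + \<bar>q\<bar>" using RP(1) by (auto simp: abs_le_iff)
    have u: "(X t, q) \<in> Bx" "(X t, P t) \<in> Bx" using bx XK[of t] t s by (auto simp: Bx_def)
    have "\<bar>pdx H (X t) (P t) - pdx H (X t) q\<bar> \<le> N * norm ((X t, P t) - (X t, q))"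
      using N u by fastforce
    also have "norm ((X t, P t) - (X t, q)) = q - P t" using \<open>P t \<le> q\<close> by (simp add: norm_Pair)
    finally show "- pdx H (X t) q - - pdx H (X t) (P t) \<le> N * (q - P t)" by simp
  qed (use st in auto)
qed

lemma barrier_app_le:
  assumes s: "0 < s0" "s0 < s" "s < T" and G: "\<And>t. s0 \<le> t \<Longrightarrow> t \<le> s \<Longrightarrow> - pdx H (X t) q \<le> 0"
    and st: "P s0 \<le> q"
  shows "P s \<le> q"
proof -
  have sub: "{s0..s} \<subseteq> {0..<T}" using s by auto
  have cX: "continuous_on {s0..s} X" and cP: "continuous_on {s0..s} P"
    using continuous_on_subset[OF contX sub] continuous_on_subset[OF contP sub] .
  obtain RX where RX: "RX > 0" "\<forall>t\<in>{s0..s}. norm (X t) \<le> RX" using cont_bound[OF compact_Icc cX] by blast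
  obtain RP where RP: "RP > 0" "\<forall>t\<in>{s0..s}. norm (P t) \<le> RP" using cont_bound[OF compact_Icc cP] by blast
  define Bx where "Bx = ({-RX..RX} \<inter> Kset b) \<times> {-(RP + \<bar>q\<bar>)..RP + \<bar>q\<bar>}"
  have Kcv: "convex (Kset b)" and Kcl: "closed (Kset b)" by (auto simp: Kset_def)
  have Bcv: "convex Bx" unfolding Bx_def by (intro convex_Times convex_Int Kcv) auto
  have Bcp: "compact Bx" unfolding Bx_def by (intro compact_Times compact_Int_closed Kcl) auto
  have BU: "Bx \<subseteq> U" using KU by (auto simp: Bx_def)
  obtain N where N: "\<forall>u\<in>Bx. \<forall>v\<in>Bx. \<bar>pdx H (fst u) (snd u) - pdx H (fst v) (snd v)\<bar> \<le> N * norm (u - v)"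
    using C1_lip[OF C1x Bcv Bcp BU] by blast
  show ?thesis
  proof (rule barrier_le[where G="\<lambda>t r. - pdx H (X t) r" and L=N, OF s(2) cP])
    fix t assume t: "s0 < t" "t < s"
    show "(P has_real_derivative - pdx H (X t) (P t)) (at t)" using dP_at t s by auto
    show "- pdx H (X t) q \<le> 0" using G t by auto
    assume "q \<le> P t"
    have tt: "t \<in> {s0..s}" using t by auto
    have "\<bar>X t\<bar> \<le> RX" "\<bar>P t\<bar> \<le> RP" using RX(2) RP(2) tt by auto
    then have bx: "-RX \<le> X t" "X t \<le> RX" "-(RP + \<bar>q\<bar>) \<le> P t" "P t \<le> RP + \<bar>q\<bar>"
      "-(RP + \<bar>q\<bar>) \<le> q" "q \<le> RP + \<bar>q\<bar>" using RP(1) by (auto simp: abs_le_iff)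
    have u: "(X t, q) \<in> Bx" "(X t, P t) \<in> Bx" using bx XK[of t] t s by (auto simp: Bx_def)
    have "\<bar>pdx H (X t) (P t) - pdx H (X t) q\<bar> \<le> N * norm ((X t, P t) - (X t, q))"
      using N u by fastforce
    also have "norm ((X t, P t) - (X t, q)) = P t - q" using \<open>q \<le> P t\<close> by (simp add: norm_Pair)
    finally show "- pdx H (X t) (P t) - - pdx H (X t) q \<le> N * (P t - q)" by simp
  qed (use st in auto)
qed

end


context hsol begin

lemma high_left:
  assumes b: "b"
  shows "\<exists>\<eta>>0. \<exists>Q1. \<forall>y\<in>{-1..-1+\<eta>}. \<forall>r\<ge>Q1. E < H y r"
proof -
  have m1: "-1 \<in> Kset b" using b by (simp add: Kset_def)
  have hb: "filterlim (\<lambda>p. H (-1) p / p) at_top at_top"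
    using cH b unfolding conditionH_def condH3_def by blast
  then have "eventually (\<lambda>r. \<bar>E\<bar> + 2 \<le> H (-1) r / r) at_top" by (simp add: filterlim_at_top)
  then obtain N where N: "\<forall>r\<ge>N. \<bar>E\<bar> + 2 \<le> H (-1) r / r" by (auto simp: eventually_at_top_linorder)
  define r1 where "r1 = max N 1"
  have r1: "r1 \<ge> 1" "r1 \<ge> N" by (auto simp: r1_def)
  have "\<bar>E\<bar> + 2 \<le> H (-1) r1 / r1" using N r1 by auto
  then have h1: "(\<bar>E\<bar> + 2) * r1 \<le> H (-1) r1" using r1 by (simp add: field_simps)
  have "(\<bar>E\<bar> + 2) * 1 \<le> (\<bar>E\<bar> + 2) * r1" using r1 by (intro mult_left_mono) auto
  then have h2: "\<bar>E\<bar> + 2 \<le> H (-1) r1" using h1 by simp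
  have pd: "pdp H (-1) r1 > 0"
  proof -
    have cont: "continuous_on {0..r1} (H (-1))"
    proof (rule DERIV_continuous_on)
      fix q show "(H (-1) has_real_derivative pdp H (-1) q) (at q within {0..r1})"
        by (rule has_field_derivative_at_within[OF dpH[OF m1]])
    qed
    have dif: "\<And>z. 0 < z \<Longrightarrow> z < r1 \<Longrightarrow> H (-1) differentiable (at z)"
      using dpH[OF m1] real_differentiable_def by blast
    have r0: "0 < r1" using r1 by simp
    obtain l z where z: "0 < z" "z < r1" "DERIV (H (-1)) z :> l" "H (-1) r1 - H (-1) 0 = (r1 - 0) * l"
      using MVT[OF r0 cont dif] by blast
    have "l = pdp H (-1) z" using DERIV_unique[OF z(3) dpH[OF m1]] .
    then have lt: "l < pdp H (-1) r1" using pdp_mono[OF m1 z(2)] by simp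
    have "H (-1) r1 = r1 * l" using z(4) H0[OF m1] by simp
    moreover have "H (-1) r1 > 0" using h2 abs_ge_zero[of E] by linarith
    ultimately have "r1 * l > 0" by simp
    then have "l > 0" using r1 by (simp add: zero_less_mult_iff)
    then show ?thesis using lt by simp
  qed
  have U1: "(-1, r1) \<in> U" using KU m1 by auto
  have tz: "((\<lambda>y. (y, r1)) \<longlongrightarrow> (-1, r1)) (at (-1))" by (intro tendsto_intros)
  have evU: "eventually (\<lambda>y. (y, r1) \<in> U) (at (-1))" using topological_tendstoD[OF tz U_open U1] .
  have t1: "((\<lambda>y. H y r1) \<longlongrightarrow> H (-1) r1) (at (-1))"
    using continuous_on_tendsto_compose[OF C1_cont[OF C1H] tz U1 evU] by simp
  have t2: "((\<lambda>y. pdp H y r1) \<longlongrightarrow> pdp H (-1) r1) (at (-1))"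
    using continuous_on_tendsto_compose[OF C1_cont[OF C1p] tz U1 evU] by simp
  have e1: "eventually (\<lambda>y. dist (H y r1) (H (-1) r1) < H (-1) r1 - E) (at (-1))"
    using tendstoD[OF t1, of "H (-1) r1 - E"] h2 by (simp add: abs_ge_self add.commute order_le_less_trans)
  have e2: "eventually (\<lambda>y. dist (pdp H y r1) (pdp H (-1) r1) < pdp H (-1) r1) (at (-1))"
    using tendstoD[OF t2 pd] .
  obtain d where d: "d > 0" "\<forall>y. y \<noteq> -1 \<and> dist y (-1) < d \<longrightarrow>
      dist (H y r1) (H (-1) r1) < H (-1) r1 - E \<and> dist (pdp H y r1) (pdp H (-1) r1) < pdp H (-1) r1"
    using eventually_conj[OF e1 e2] by (auto simp: eventually_at)
  have Eh: "E < H (-1) r1" using h2 abs_ge_self[of E] by linarith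
  have near: "E < H y r1 \<and> 0 < pdp H y r1" if "\<bar>y + 1\<bar> < d" for y
  proof (cases "y = -1")
    case True then show ?thesis using Eh pd by simp
  next
    case False
    then have "dist (H y r1) (H (-1) r1) < H (-1) r1 - E" "dist (pdp H y r1) (pdp H (-1) r1) < pdp H (-1) r1"
      using d that by (auto simp: dist_real_def)
    then show ?thesis by (auto simp: dist_real_def)
  qed
  have main: "\<forall>y\<in>{-1..-1 + min (d / 2) 1}. \<forall>r. r1 \<le> r \<longrightarrow> E < H y r"
  proof (intro ballI allI impI)
    fix y r assume y: "y \<in> {-1..-1 + min (d / 2) 1}" and r: "r1 \<le> r"
    have yK: "y \<in> Kset b" using y b by (auto simp: Kset_def)
    have "\<bar>y + 1\<bar> < d" using y d by auto
    then have ny: "E < H y r1" "0 < pdp H y r1" using near by auto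
    have "H y r1 \<le> H y r"
    proof (rule DERIV_nonneg_imp_nondecreasing[OF r])
      fix s assume "r1 \<le> s" "s \<le> r"
      then have "pdp H y r1 \<le> pdp H y s" by (intro pdp_mono_le[OF yK])
      then show "\<exists>d. DERIV (H y) s :> d \<and> 0 \<le> d" using dpH[OF yK, of s] ny by force
    qed
    then show "E < H y r" using ny by simp
  qed
  moreover have "0 < min (d / 2) 1" using d by simp
  ultimately show ?thesis by blast
qed

lemma high_right:
  assumes b: "b"
  shows "\<exists>\<eta>>0. \<exists>Q1. \<forall>y\<in>{1-\<eta>..1}. \<forall>r\<le>Q1. E < H y r"
proof -
  have m1: "1 \<in> Kset b" using b by (simp add: Kset_def)
  have hb: "filterlim (\<lambda>p. H 1 p / (- p)) at_top at_bot"
    using cH b unfolding conditionH_def condH3_def by blast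
  then have "eventually (\<lambda>r. \<bar>E\<bar> + 2 \<le> H 1 r / (- r)) at_bot" by (simp add: filterlim_at_top)
  then obtain N where N: "\<forall>r\<le>N. \<bar>E\<bar> + 2 \<le> H 1 r / (- r)" by (auto simp: eventually_at_bot_linorder)
  define r1 where "r1 = min N (-1)"
  have r1: "r1 \<le> -1" "r1 \<le> N" by (auto simp: r1_def)
  have "\<bar>E\<bar> + 2 \<le> H 1 r1 / (- r1)" using N r1 by auto
  then have h1: "(\<bar>E\<bar> + 2) * (- r1) \<le> H 1 r1" using r1 by (simp add: field_simps)
  have "(\<bar>E\<bar> + 2) * 1 \<le> (\<bar>E\<bar> + 2) * (- r1)" using r1 by (intro mult_left_mono) auto
  then have h2: "\<bar>E\<bar> + 2 \<le> H 1 r1" using h1 by simp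
  have pd: "pdp H 1 r1 < 0"
  proof -
    have cont: "continuous_on {r1..0} (H 1)"
    proof (rule DERIV_continuous_on)
      fix q show "(H 1 has_real_derivative pdp H 1 q) (at q within {r1..0})"
        by (rule has_field_derivative_at_within[OF dpH[OF m1]])
    qed
    have dif: "\<And>z. r1 < z \<Longrightarrow> z < 0 \<Longrightarrow> H 1 differentiable (at z)"
      using dpH[OF m1] real_differentiable_def by blast
    have r0: "r1 < 0" using r1 by simp
    obtain l z where z: "r1 < z" "z < 0" "DERIV (H 1) z :> l" "H 1 0 - H 1 r1 = (0 - r1) * l"
      using MVT[OF r0 cont dif] by blast
    have "l = pdp H 1 z" using DERIV_unique[OF z(3) dpH[OF m1]] .
    then have lt: "pdp H 1 r1 < l" using pdp_mono[OF m1 z(1)] by simp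
    have "H 1 r1 = r1 * l" using z(4) H0[OF m1] by simp
    moreover have "H 1 r1 > 0" using h2 abs_ge_zero[of E] by linarith
    ultimately have "r1 * l > 0" by simp
    then have "l < 0" using r1 by (simp add: zero_less_mult_iff)
    then show ?thesis using lt by simp
  qed
  have U1: "(1, r1) \<in> U" using KU m1 by auto
  have tz: "((\<lambda>y. (y, r1)) \<longlongrightarrow> (1, r1)) (at 1)" by (intro tendsto_intros)
  have evU: "eventually (\<lambda>y. (y, r1) \<in> U) (at 1)" using topological_tendstoD[OF tz U_open U1] .
  have t1: "((\<lambda>y. H y r1) \<longlongrightarrow> H 1 r1) (at 1)"
    using continuous_on_tendsto_compose[OF C1_cont[OF C1H] tz U1 evU] by simp
  have t2: "((\<lambda>y. pdp H y r1) \<longlongrightarrow> pdp H 1 r1) (at 1)"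
    using continuous_on_tendsto_compose[OF C1_cont[OF C1p] tz U1 evU] by simp
  have e1: "eventually (\<lambda>y. dist (H y r1) (H 1 r1) < H 1 r1 - E) (at 1)"
    using tendstoD[OF t1, of "H 1 r1 - E"] h2 by (simp add: abs_ge_self add.commute order_le_less_trans)
  have pd': "- pdp H 1 r1 > 0" using pd by simp
  have e2: "eventually (\<lambda>y. dist (pdp H y r1) (pdp H 1 r1) < - pdp H 1 r1) (at 1)"
    using tendstoD[OF t2 pd'] .
  obtain d where d: "d > 0" "\<forall>y. y \<noteq> 1 \<and> dist y 1 < d \<longrightarrow>
      dist (H y r1) (H 1 r1) < H 1 r1 - E \<and> dist (pdp H y r1) (pdp H 1 r1) < - pdp H 1 r1"
    using eventually_conj[OF e1 e2] by (auto simp: eventually_at)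
  have Eh: "E < H 1 r1" using h2 abs_ge_self[of E] by linarith
  have near: "E < H y r1 \<and> pdp H y r1 < 0" if "\<bar>y - 1\<bar> < d" for y
  proof (cases "y = 1")
    case True then show ?thesis using Eh pd by simp
  next
    case False
    then have "dist (H y r1) (H 1 r1) < H 1 r1 - E" "dist (pdp H y r1) (pdp H 1 r1) < - pdp H 1 r1"
      using d that by (auto simp: dist_real_def)
    then show ?thesis by (auto simp: dist_real_def)
  qed
  have main: "\<forall>y\<in>{1 - min (d / 2) 1..1}. \<forall>r. r \<le> r1 \<longrightarrow> E < H y r"
  proof (intro ballI allI impI)
    fix y r assume y: "y \<in> {1 - min (d / 2) 1..1}" and r: "r \<le> r1"
    have yK: "y \<in> Kset b" using y b by (auto simp: Kset_def)
    have "\<bar>y - 1\<bar> < d" using y d by auto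
    then have ny: "E < H y r1" "pdp H y r1 < 0" using near by auto
    have "H y r1 \<le> H y r"
    proof (rule DERIV_nonpos_imp_nonincreasing[OF r])
      fix s assume "r \<le> s" "s \<le> r1"
      then have "pdp H y s \<le> pdp H y r1" by (intro pdp_mono_le[OF yK])
      then show "\<exists>d. DERIV (H y) s :> d \<and> d \<le> 0" using dpH[OF yK, of s] ny by force
    qed
    then show "E < H y r" using ny by simp
  qed
  moreover have "0 < min (d / 2) 1" using d by simp
  ultimately show ?thesis by blast
qed

end


context hsol begin

lemma evT: "eventually (\<lambda>s. 0 \<le> s \<and> s < T) (at_left T)"
  unfolding eventually_at_left_field using Tpos by (auto intro!: exI[of _ 0])

lemma case_true:
  assumes b: "b"
  shows "((X \<longlongrightarrow> -1) (at_left T) \<and> filterlim P at_bot (at_left T))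
       \<or> ((X \<longlongrightarrow> 1) (at_left T) \<and> filterlim P at_top (at_left T))"
proof -
  define E where "E = H x p"
  have en: "H (X s) (P s) = E" if "0 \<le> s" "s < T" for s using energy[of s] that by (simp add: E_def)
  have XK1: "-1 \<le> X s \<and> X s \<le> 1" if "0 \<le> s" "s < T" for s using XK[of s] that b by (auto simp: Kset_def)
  have escP: "eventually (\<lambda>s. M < \<bar>P s\<bar>) (at_left T)" for M
    using eventually_conj[OF escape[of 1 M] evT] by eventually_elim (use XK1 in force)
  have sl: "filterlim P at_top (at_left T) \<or> filterlim P at_bot (at_left T)"
    by (rule sign_lim[OF contP escP])
  obtain \<eta>L QL where L: "\<eta>L > 0" "\<forall>y\<in>{-1..-1+\<eta>L}. \<forall>r\<ge>QL. E < H y r"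
    using high_left[OF b, of E] by blast
  obtain \<eta>R QR where R: "\<eta>R > 0" "\<forall>y\<in>{1-\<eta>R..1}. \<forall>r\<le>QR. E < H y r"
    using high_right[OF b, of E] by blast
  have iK: "interior (Kset b) = {-1<..<1}" using b by (simp add: Kset_def)
  show ?thesis
  proof (cases "filterlim P at_top (at_left T)")
    case True
    have "(X \<longlongrightarrow> 1) (at_left T)"
    proof (rule tendstoI)
      fix \<epsilon> :: real assume \<epsilon>: "\<epsilon> > 0"
      define e1 where "e1 = min \<eta>L (1/2)"
      define e2 where "e2 = min \<epsilon> (1/2)"
      have e12: "0 < e1" "e1 \<le> \<eta>L" "e1 \<le> 1/2" "0 < e2" "e2 \<le> \<epsilon>" "e2 \<le> 1/2"
        using L \<epsilon> by (auto simp: e1_def e2_def)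
      obtain Q2 where Q2: "Q2 \<ge> 0" "\<forall>y\<in>{-1+e1..1-e2}. \<forall>r. Q2 \<le> \<bar>r\<bar> \<longrightarrow> E < H y r"
      proof -
        have h: "2 * e1 \<le> 1" "2 * e2 \<le> 1" using e12(3,6) by auto
        have ac: "-1+e1 \<le> 1-e2" using h by linarith
        have sub0: "{-1+e1..1-e2} \<subseteq> {-1<..<1}"
        proof
          fix y assume "y \<in> {-1+e1..1-e2}"
          then have "-1 + e1 \<le> y \<or> -1 + e2 \<le> y" "y \<le> 1 - e2 \<or> y \<le> 1 - e1" by auto
          then show "y \<in> {-1<..<1}" using e12(1,4) by auto
        qed
        have sub: "{-1+e1..1-e2} \<subseteq> interior (Kset b)" using sub0 iK by simp
        show ?thesis using mid_high[OF ac sub, of E] that by blast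
      qed
      have evP: "eventually (\<lambda>s. max QL Q2 \<le> P s) (at_left T)"
        using True unfolding filterlim_at_top by blast
      show "eventually (\<lambda>s. dist (X s) 1 < \<epsilon>) (at_left T)"
        using eventually_conj[OF evP evT]
      proof eventually_elim
        case (elim s)
        have X1: "-1 \<le> X s" "X s \<le> 1" using XK1 elim by auto
        have "\<not> X s \<le> 1 - e2"
        proof
          assume le: "X s \<le> 1 - e2"
          show False
          proof (cases "X s \<le> -1 + e1")
            case True
            then have "E < H (X s) (P s)" using L(2) X1 e12 elim by auto
            then show False using en elim by auto
          next
            case False
            then have "E < H (X s) (P s)" using Q2 X1 le elim by auto
            then show False using en elim by auto
          qed
        qed
        then show ?case using X1 e12 by (auto simp: dist_real_def)
      qed
    qed
    then show ?thesis using True by blast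
  next
    case False
    then have Pb: "filterlim P at_bot (at_left T)" using sl by blast
    have "(X \<longlongrightarrow> -1) (at_left T)"
    proof (rule tendstoI)
      fix \<epsilon> :: real assume \<epsilon>: "\<epsilon> > 0"
      define e1 where "e1 = min \<eta>R (1/2)"
      define e2 where "e2 = min \<epsilon> (1/2)"
      have e12: "0 < e1" "e1 \<le> \<eta>R" "e1 \<le> 1/2" "0 < e2" "e2 \<le> \<epsilon>" "e2 \<le> 1/2"
        using R \<epsilon> by (auto simp: e1_def e2_def)
      obtain Q2 where Q2: "Q2 \<ge> 0" "\<forall>y\<in>{-1+e2..1-e1}. \<forall>r. Q2 \<le> \<bar>r\<bar> \<longrightarrow> E < H y r"
      proof -
        have h: "2 * e1 \<le> 1" "2 * e2 \<le> 1" using e12(3,6) by auto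
        have ac: "-1+e2 \<le> 1-e1" using h by linarith
        have sub0: "{-1+e2..1-e1} \<subseteq> {-1<..<1}"
        proof
          fix y assume "y \<in> {-1+e2..1-e1}"
          then have "-1 + e1 \<le> y \<or> -1 + e2 \<le> y" "y \<le> 1 - e2 \<or> y \<le> 1 - e1" by auto
          then show "y \<in> {-1<..<1}" using e12(1,4) by auto
        qed
        have sub: "{-1+e2..1-e1} \<subseteq> interior (Kset b)" using sub0 iK by simp
        show ?thesis using mid_high[OF ac sub, of E] that by blast
      qed
      have evP: "eventually (\<lambda>s. P s \<le> min QR (- Q2)) (at_left T)"
        using Pb unfolding filterlim_at_bot by blast
      show "eventually (\<lambda>s. dist (X s) (-1) < \<epsilon>) (at_left T)"
        using eventually_conj[OF evP evT]
      proof eventually_elim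
        case (elim s)
        have X1: "-1 \<le> X s" "X s \<le> 1" using XK1 elim by auto
        have "\<not> -1 + e2 \<le> X s"
        proof
          assume le: "-1 + e2 \<le> X s"
          show False
          proof (cases "1 - e1 \<le> X s")
            case True
            then have "E < H (X s) (P s)" using R(2) X1 e12 elim by auto
            then show False using en elim by auto
          next
            case False
            then have "E < H (X s) (P s)" using Q2 X1 le elim by auto
            then show False using en elim by auto
          qed
        qed
        then show ?case using X1 e12 by (auto simp: dist_real_def)
      qed
    qed
    then show ?thesis using Pb by blast
  qed
qed

lemma case_false:
  assumes b: "\<not> b"
  shows "(filterlim X at_bot (at_left T) \<and> filterlim P at_bot (at_left T))
       \<or> (filterlim X at_top (at_left T) \<and> filterlim P at_top (at_left T))"
proof -
  define E where "E = H x p"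
  have en: "H (X s) (P s) = E" if "0 \<le> s" "s < T" for s using energy[of s] that by (simp add: E_def)
  have KU': "Kset b = UNIV" and iK: "interior (Kset b) = UNIV" using b by (auto simp: Kset_def)
  have escX: "eventually (\<lambda>s. A < \<bar>X s\<bar>) (at_left T)" for A
  proof (cases "A < 0")
    case True then show ?thesis by (intro always_eventually) (auto intro: order_less_le_trans)
  next
    case False
    obtain Q where Q: "Q \<ge> 0" "\<forall>y\<in>{-A..A}. \<forall>r. Q \<le> \<bar>r\<bar> \<longrightarrow> E < H y r"
      using mid_high[of "-A" A E] False iK by auto
    show ?thesis
      using eventually_conj[OF escape[of A Q] evT]
    proof eventually_elim
      case (elim s)
      show ?case
      proof (rule ccontr)
        assume "\<not> A < \<bar>X s\<bar>"
        then have "X s \<in> {-A..A}" by auto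
        then have "\<not> Q \<le> \<bar>P s\<bar>" using Q en elim by fastforce
        then show False using elim \<open>\<not> A < \<bar>X s\<bar>\<close> by auto
      qed
    qed
  qed
  have sl: "filterlim X at_top (at_left T) \<or> filterlim X at_bot (at_left T)"
    by (rule sign_lim[OF contX escX])
  show ?thesis
  proof (cases "filterlim X at_top (at_left T)")
    case True
    obtain yy qq :: "nat \<Rightarrow> real" where
      H5: "filterlim qq at_top sequentially" "\<forall>n. \<forall>z\<in>Kset b. z \<ge> yy n \<longrightarrow> - pdx H z (qq n) \<ge> 0"
      using cH unfolding conditionH_def condH5_def by blast
    have evq: "eventually (\<lambda>s. qq n \<le> P s) (at_left T)" for n
    proof -
      have "eventually (\<lambda>y. qq n \<le> mm y) at_top" using H4(2) b by (simp add: upperF_def filterlim_at_top)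
      then obtain B where B: "\<forall>y\<ge>B. qq n \<le> mm y" by (auto simp: eventually_at_top_linorder)
      have "eventually (\<lambda>s. max B (yy n) \<le> X s) (at_left T)" using True unfolding filterlim_at_top by blast
      then obtain c where c: "c < T" "\<forall>s>c. s < T \<longrightarrow> max B (yy n) \<le> X s"
        by (auto simp: eventually_at_left_field)
      define s1 where "s1 = max c (T / 2)"
      have s1: "0 < s1" "s1 < T" using c Tpos by (auto simp: s1_def)
      have Xb: "max B (yy n) \<le> X s" if "s1 < s" "s < T" for s using c that by (auto simp: s1_def)
      have "\<exists>s0. s1 < s0 \<and> s0 < T \<and> pdp H (X s0) (P s0) > 0"
      proof (rule ccontr)
        assume "\<not> ?thesis"
        then have np: "pdp H (X s) (P s) \<le> 0" if "s1 < s" "s < T" for s using that by force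
        define sm where "sm = (s1 + T) / 2"
        have sm: "s1 < sm" "sm < T" using s1 by (auto simp: sm_def)
        have mono: "X s \<le> X sm" if "sm \<le> s" "s < T" for s
        proof (rule DERIV_nonpos_imp_nonincreasing[OF that(1)])
          fix y assume y: "sm \<le> y" "y \<le> s"
          then have yy: "0 < y" "y < T" "s1 < y" using that sm s1 by auto
          show "\<exists>d. DERIV X y :> d \<and> d \<le> 0" using dX_at[OF yy(1,2)] np[OF yy(3,2)] by blast
        qed
        have "eventually (\<lambda>s. X sm + 1 \<le> X s) (at_left T)" using True by (simp add: filterlim_at_top)
        then obtain c2 where c2: "c2 < T" "\<forall>s>c2. s < T \<longrightarrow> X sm + 1 \<le> X s"
          by (auto simp: eventually_at_left_field)
        define s where "s = (max c2 sm + T) / 2"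
        have s: "c2 < s" "sm < s" "s < T" using c2 sm by (auto simp: s_def)
        then show False using c2 mono[of s] by force
      qed
      then obtain s0 where s0: "s1 < s0" "s0 < T" "pdp H (X s0) (P s0) > 0" by blast
      have "P s0 > mm (X s0)" using mm_lt[of "X s0" "P s0"] s0 iK by auto
      moreover have "qq n \<le> mm (X s0)" using B Xb[OF s0(1,2)] by auto
      ultimately have st: "qq n \<le> P s0" by simp
      have "qq n \<le> P s" if "s0 < s" "s < T" for s
      proof (rule barrier_app[of s0 s])
        show "0 < s0" using s1 s0 by simp
        fix t assume "s0 \<le> t" "t \<le> s"
        then have "yy n \<le> X t" using Xb[of t] s0 that by auto
        then show "- pdx H (X t) (qq n) \<ge> 0" using H5(2) KU' by auto
      qed (use that st in auto)
      then show ?thesis unfolding eventually_at_left_field using s0 by blast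
    qed
    have "filterlim P at_top (at_left T)" unfolding filterlim_at_top
    proof
      fix Z
      obtain n where n: "Z \<le> qq n"
        using H5(1) unfolding filterlim_at_top eventually_sequentially by blast
      show "eventually (\<lambda>s. Z \<le> P s) (at_left T)"
        using evq[of n] by (rule eventually_mono) (use n in auto)
    qed
    then show ?thesis using True by blast
  next
    case False
    then have Xb0: "filterlim X at_bot (at_left T)" using sl by blast
    obtain yy qq :: "nat \<Rightarrow> real" where
      H5: "filterlim qq at_bot sequentially" "\<forall>n. \<forall>z\<in>Kset b. z \<le> yy n \<longrightarrow> - pdx H z (qq n) \<le> 0"
      using cH unfolding conditionH_def condH5_def by blast
    have evq: "eventually (\<lambda>s. P s \<le> qq n) (at_left T)" for n
    proof -
      have "eventually (\<lambda>y. mm y \<le> qq n) at_bot" using H4(1) b by (simp add: lowerF_def filterlim_at_bot)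
      then obtain B where B: "\<forall>y\<le>B. mm y \<le> qq n" by (auto simp: eventually_at_bot_linorder)
      have "eventually (\<lambda>s. X s \<le> min B (yy n)) (at_left T)" using Xb0 unfolding filterlim_at_bot by blast
      then obtain c where c: "c < T" "\<forall>s>c. s < T \<longrightarrow> X s \<le> min B (yy n)"
        by (auto simp: eventually_at_left_field)
      define s1 where "s1 = max c (T / 2)"
      have s1: "0 < s1" "s1 < T" using c Tpos by (auto simp: s1_def)
      have Xb: "X s \<le> min B (yy n)" if "s1 < s" "s < T" for s using c that by (auto simp: s1_def)
      have "\<exists>s0. s1 < s0 \<and> s0 < T \<and> pdp H (X s0) (P s0) < 0"
      proof (rule ccontr)
        assume "\<not> ?thesis"
        then have np: "pdp H (X s) (P s) \<ge> 0" if "s1 < s" "s < T" for s using that by force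
        define sm where "sm = (s1 + T) / 2"
        have sm: "s1 < sm" "sm < T" using s1 by (auto simp: sm_def)
        have mono: "X sm \<le> X s" if "sm \<le> s" "s < T" for s
        proof (rule DERIV_nonneg_imp_nondecreasing[OF that(1)])
          fix y assume y: "sm \<le> y" "y \<le> s"
          then have yy: "0 < y" "y < T" "s1 < y" using that sm s1 by auto
          show "\<exists>d. DERIV X y :> d \<and> 0 \<le> d" using dX_at[OF yy(1,2)] np[OF yy(3,2)] by blast
        qed
        have "eventually (\<lambda>s. X s \<le> X sm - 1) (at_left T)" using Xb0 by (simp add: filterlim_at_bot)
        then obtain c2 where c2: "c2 < T" "\<forall>s>c2. s < T \<longrightarrow> X s \<le> X sm - 1"
          by (auto simp: eventually_at_left_field)
        define s where "s = (max c2 sm + T) / 2"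
        have s: "c2 < s" "sm < s" "s < T" using c2 sm by (auto simp: s_def)
        then show False using c2 mono[of s] by force
      qed
      then obtain s0 where s0: "s1 < s0" "s0 < T" "pdp H (X s0) (P s0) < 0" by blast
      have "P s0 < mm (X s0)" using mm_gt[of "X s0" "P s0"] s0 iK by auto
      moreover have "mm (X s0) \<le> qq n" using B Xb[OF s0(1,2)] by auto
      ultimately have st: "P s0 \<le> qq n" by simp
      have "P s \<le> qq n" if "s0 < s" "s < T" for s
      proof (rule barrier_app_le[of s0 s])
        show "0 < s0" using s1 s0 by simp
        fix t assume "s0 \<le> t" "t \<le> s"
        then have "X t \<le> yy n" using Xb[of t] s0 that by auto
        then show "- pdx H (X t) (qq n) \<le> 0" using H5(2) KU' by auto
      qed (use that st in auto)
      then show ?thesis unfolding eventually_at_left_field using s0 by blast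
    qed
    have "filterlim P at_bot (at_left T)" unfolding filterlim_at_bot
    proof
      fix Z
      obtain n where n: "qq n \<le> Z"
        using H5(1) unfolding filterlim_at_bot eventually_sequentially by blast
      show "eventually (\<lambda>s. P s \<le> Z) (at_left T)"
        using evq[of n] by (rule eventually_mono) (use n in auto)
    qed
    then show ?thesis using Xb0 by blast
  qed
qed

end

theorem mainTheorem10:
  fixes b :: bool and H :: "real \<Rightarrow> real \<Rightarrow> real"
    and x p T :: real and X P :: "real \<Rightarrow> real"
  assumes "conditionH b H"
    and "x \<in> Kset b"
    and "ham_maxsol b H x p T X P"
  shows "(filterlim X (lowerLim b) (at T within {0..<T}) \<and> filterlim P at_bot (at T within {0..<T}))
       \<or> (filterlim X (upperLim b) (at T within {0..<T}) \<and> filterlim P at_top (at T within {0..<T}))"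
proof (cases "T > 0")
  case False
  then have "{0..<T} = {}" by auto
  then show ?thesis by (simp add: filterlim_def)
next
  case True
  obtain U where U: "open U" "\<And>x q. x \<in> Kset b \<Longrightarrow> (x, q) \<in> U" "C2_on U H"
  proof (cases b)
    case True
    then obtain \<epsilon> where "\<epsilon> > 0" "C2_on ({-1-\<epsilon><..<1+\<epsilon>} \<times> UNIV) H"
      using assms(1) by (auto simp: conditionH_def condH1_def)
    moreover have "open ({-1-\<epsilon><..<1+\<epsilon>} \<times> (UNIV :: real set))" by (intro open_Times) auto
    moreover have "(y, q) \<in> {-1-\<epsilon><..<1+\<epsilon>} \<times> UNIV" if "y \<in> Kset b" for y q
      using that True \<open>\<epsilon> > 0\<close> by (auto simp: Kset_def)
    ultimately show ?thesis using that[of "{-1-\<epsilon><..<1+\<epsilon>} \<times> UNIV"] by blast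
  next
    case False
    then have "C2_on UNIV H" using assms(1) by (auto simp: conditionH_def condH1_def)
    then show ?thesis using that[of UNIV] by auto
  qed
  interpret hsol b H U x p T X P
    by unfold_locales (use U assms True in auto)
  show ?thesis
  proof (cases b)
    case True
    then show ?thesis using case_true[OF True] unfolding atT
      by (auto simp: lowerLim_def upperLim_def)
  next
    case False
    then show ?thesis using case_false[OF False] unfolding atT
      by (auto simp: lowerLim_def upperLim_def)
  qed
qed


end
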